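(* Let $\alpha>-1$, $w\in\mathbb{D}$, $\phi\equiv w$ (constant map), and $\psi$ analytic on $\mathbb{D}$ with $C_{\psi,\phi}$ bounded on $L^2_a(dA_\alpha)$. (i) If $k^{\alpha}_w=\mu\psi$ for some $\mu\ne0$, then $W(C_{\psi,\phi})=[0,\bar\mu\|\psi\|^2]$ (the line segment from $0$ to $\bar\mu\|\psi\|^2$). (ii) If $k^\alpha_w\perp\psi$, then $W(C_{\psi,\phi})$ is the closed disc centred at the origin with radius $\dfrac{\|\psi\|}{2(1-|w|^2)^{\frac{\alpha}{2}+1}}$. (iii) Otherwise, $W(C_{\psi,\phi})$ is a closed elliptical disc with foci at $0$ and $\psi(w)$.
   Context: $\mathbb{D}$ is the open unit disc. $L^2_a(dA_\alpha)$ is the weighted Bergman space of analytic $f$ on $\mathbb{D}$ with $\int_{\mathbb{D}}|f|^2dA_\alpha<\infty$, $dA_{\alpha}(z)=(\alpha+1)(1-|z|^2)^{\alpha}dA(z)$, $dA$ normalized area measure, with norm $\|\cdot\|$. Its reproducing kernel at $w$ is $k^\alpha_w(z)=(1-\bar wz)^{-(\alpha+2)}$. $C_{\psi,\phi}f=\psi\cdot(f\circ\phi)$. $W(T)=\{\langle Tf,f\rangle:\|f\|=1\}$. *)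

theory Defs
  imports "HOL-Analysis.Analysis"
begin

text \<open>Weighted area measure dA_alpha on the open unit disc:
  dA_alpha(z) = (alpha+1) (1-|z|^2)^alpha dA(z), with dA = dx dy / pi the normalized area measure.\<close>
definition dA_alpha :: "real \<Rightarrow> complex measure" where
  "dA_alpha \<alpha> = density (restrict_space lborel (ball 0 1))
      (\<lambda>z. ennreal ((\<alpha> + 1) / pi * (1 - (cmod z)\<^sup>2) powr \<alpha>))"

text \<open>The weighted Bergman space L^2_a(dA_alpha): analytic functions on the disc
  (values outside the disc are irrelevant) that are square integrable.\<close>
definition bergman :: "real \<Rightarrow> (complex \<Rightarrow> complex) set" where
  "bergman \<alpha> = {f. f holomorphic_on ball 0 1 \<and>
      integrable (dA_alpha \<alpha>) (\<lambda>z. (cmod (f z))\<^sup>2)}"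

definition bergman_inner :: "real \<Rightarrow> (complex \<Rightarrow> complex) \<Rightarrow> (complex \<Rightarrow> complex) \<Rightarrow> complex" where
  "bergman_inner \<alpha> f g = (\<integral>z. f z * cnj (g z) \<partial>dA_alpha \<alpha>)"

definition bergman_norm :: "real \<Rightarrow> (complex \<Rightarrow> complex) \<Rightarrow> real" where
  "bergman_norm \<alpha> f = sqrt (\<integral>z. (cmod (f z))\<^sup>2 \<partial>dA_alpha \<alpha>)"

definition bergman_kernel :: "real \<Rightarrow> complex \<Rightarrow> complex \<Rightarrow> complex" where
  "bergman_kernel \<alpha> w z = (1 - cnj w * z) powr (- (of_real \<alpha> + 2))"

definition wcomp :: "(complex \<Rightarrow> complex) \<Rightarrow> (complex \<Rightarrow> complex) \<Rightarrow> (complex \<Rightarrow> complex) \<Rightarrow> (complex \<Rightarrow> complex)" where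
  "wcomp \<psi> \<phi> f = (\<lambda>z. \<psi> z * f (\<phi> z))"

definition bounded_on_bergman :: "real \<Rightarrow> ((complex \<Rightarrow> complex) \<Rightarrow> (complex \<Rightarrow> complex)) \<Rightarrow> bool" where
  "bounded_on_bergman \<alpha> T \<longleftrightarrow> (\<forall>f\<in>bergman \<alpha>. T f \<in> bergman \<alpha>) \<and>
     (\<exists>M. \<forall>f\<in>bergman \<alpha>. bergman_norm \<alpha> (T f) \<le> M * bergman_norm \<alpha> f)"

definition numerical_range :: "real \<Rightarrow> ((complex \<Rightarrow> complex) \<Rightarrow> (complex \<Rightarrow> complex)) \<Rightarrow> complex set" where
  "numerical_range \<alpha> T = {bergman_inner \<alpha> (T f) f | f. f \<in> bergman \<alpha> \<and> bergman_norm \<alpha> f = 1}"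

end

theory Submission
  imports Defs "HOL-Complex_Analysis.Complex_Analysis"
begin

definition c2v :: "complex \<Rightarrow> real^2" where
  "c2v z = (\<chi> i. if i = 1 then Re z else Im z)"
definition v2c :: "real^2 \<Rightarrow> complex" where
  "v2c v = Complex (v$1) (v$2)"

lemma c2v_nth [simp]: "c2v z $ 1 = Re z" "c2v z $ 2 = Im z"
  by (auto simp: c2v_def)

lemma v2c_c2v [simp]: "v2c (c2v z) = z"
  by (simp add: v2c_def complex_eq_iff)

lemma c2v_v2c [simp]: "c2v (v2c v) = v"
  by (simp add: v2c_def vec_eq_iff forall_2)

lemma linear_c2v: "linear c2v"
  by (rule linearI) (auto simp: vec_eq_iff forall_2)

lemma linear_v2c: "linear v2c"
  by (rule linearI) (auto simp: v2c_def complex_eq_iff)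

lemma c2v_meas [measurable]: "c2v \<in> borel_measurable borel"
  using linear_c2v by (intro borel_measurable_continuous_onI linear_continuous_on) (simp add: linear_conv_bounded_linear)

lemma v2c_meas [measurable]: "v2c \<in> borel_measurable borel"
  using linear_v2c by (intro borel_measurable_continuous_onI linear_continuous_on) (simp add: linear_conv_bounded_linear)

lemma Basis_vec2: "(Basis :: (real^2) set) = {axis 1 1, axis 2 1}"
  by (auto simp: Basis_vec_def UNIV_2)

lemma axis_12_neq: "axis 1 (1::real) \<noteq> (axis 2 1 :: real^2)"
  by (auto simp: axis_def vec_eq_iff)

lemma prod_Basis_vec2: "(\<Prod>b\<in>(Basis :: (real^2) set). f b) = f (axis 1 1) * f (axis 2 1)"
  by (simp add: Basis_vec2 axis_12_neq)

lemma lborel_v2: "(lborel :: (real^2) measure) = distr lborel borel c2v"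
proof (rule lborel_eqI)
  fix l u :: "real^2"
  assume le: "\<And>b. b \<in> Basis \<Longrightarrow> l \<bullet> b \<le> u \<bullet> b"
  have le1: "l$1 \<le> u$1" and le2: "l$2 \<le> u$2"
    using le[of "axis 1 1"] le[of "axis 2 1"] by (auto simp: Basis_vec2 inner_axis)
  have "c2v -` box l u = box (Complex (l$1) (l$2)) (Complex (u$1) (u$2))"
    by (auto simp: mem_box_cart mem_box Basis_complex_def forall_2)
  then have "emeasure (distr lborel borel c2v) (box l u) =
      emeasure lborel (box (Complex (l$1) (l$2)) (Complex (u$1) (u$2)))"
    by (subst emeasure_distr) auto
  also have "\<dots> = ennreal ((u$1 - l$1) * (u$2 - l$2))"
    using le1 le2 by (subst emeasure_lborel_box) (auto simp: Basis_complex_def)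
  also have "\<dots> = (\<Prod>b\<in>Basis. (u - l) \<bullet> b)"
    by (simp add: prod_Basis_vec2 inner_axis)
  finally show "emeasure (distr lborel borel c2v) (box l u) = (\<Prod>b\<in>Basis. (u - l) \<bullet> b)" .
qed simp

lemma lborel_complex_v2: "(lborel :: complex measure) = distr lborel borel v2c"
proof -
  have "distr (lborel :: (real^2) measure) borel v2c = distr (distr lborel borel c2v) borel v2c"
    using lborel_v2 by simp
  also have "\<dots> = distr lborel borel (v2c \<circ> c2v)"
    by (subst distr_distr) auto
  also have "v2c \<circ> c2v = id" by (auto simp: fun_eq_iff)
  finally show ?thesis by (simp add: distr_id2)
qed

lemma inner_vec2: "(x::real^2) \<bullet> y = x$1 * y$1 + x$2 * y$2"
  by (simp add: inner_vec_def sum_2)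

lemma orth_rot:
  assumes "cmod u = 1"
  shows "orthogonal_transformation (\<lambda>v. c2v (u * v2c v))"
proof -
  have u: "(Re u)\<^sup>2 + (Im u)\<^sup>2 = 1" using assms by (simp add: cmod_def)
  have "linear (\<lambda>v. c2v (u * v2c v))"
    by (rule linearI) (auto simp: vec_eq_iff forall_2 v2c_def algebra_simps)
  moreover have "c2v (u * v2c v) \<bullet> c2v (u * v2c w) = v \<bullet> w" for v w
  proof -
    have "c2v (u * v2c v) \<bullet> c2v (u * v2c w) =
       ((Re u)\<^sup>2 + (Im u)\<^sup>2) * (v$1 * w$1 + v$2 * w$2)"
      by (simp add: inner_vec2 v2c_def algebra_simps power2_eq_square)
    then show ?thesis using u by (simp add: inner_vec2)
  qed
  ultimately show ?thesis by (simp add: orthogonal_transformation_def)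
qed

lemma lborel_v2_rot:
  assumes "cmod u = 1"
  shows "distr (lborel :: (real^2) measure) borel (\<lambda>v. c2v (u * v2c v)) = lborel"
proof (rule lborel_eqI[symmetric])
  fix l r :: "real^2"
  assume le: "\<And>b. b \<in> Basis \<Longrightarrow> l \<bullet> b \<le> r \<bullet> b"
  define Q' where "Q' = (\<lambda>v. c2v (cnj u * v2c v))"
  have u0: "u \<noteq> 0" using assms by auto
  have cu: "cmod (cnj u) = 1" using assms by simp
  have uu: "cnj u * u = 1"
    using assms by (metis complex_norm_square mult.commute of_real_1 power_one)
  have orth: "orthogonal_transformation Q'"
    unfolding Q'_def by (rule orth_rot[OF cu])
  have pre: "(\<lambda>v. c2v (u * v2c v)) -` box l r = Q' ` box l r"
  proof (intro set_eqI iffI)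
    fix x assume "x \<in> (\<lambda>v. c2v (u * v2c v)) -` box l r"
    then have "c2v (u * v2c x) \<in> box l r" by simp
    moreover have "x = Q' (c2v (u * v2c x))"
      by (simp add: Q'_def mult.assoc[symmetric] uu)
    ultimately show "x \<in> Q' ` box l r" by blast
  next
    fix x assume "x \<in> Q' ` box l r"
    then obtain y where y: "y \<in> box l r" "x = Q' y" by blast
    have "c2v (u * v2c x) = y"
      using y(2) by (simp add: Q'_def mult.assoc[symmetric] uu[unfolded mult.commute[of "cnj u"]])
    then show "x \<in> (\<lambda>v. c2v (u * v2c v)) -` box l r" using y by simp
  qed
  have meas: "(\<lambda>v. c2v (u * v2c v)) \<in> borel_measurable (borel :: (real^2) measure)"
    by measurable
  have lm: "box l r \<in> lmeasurable" by simp
  have lm': "Q' ` box l r \<in> lmeasurable"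
    by (rule measurable_orthogonal_image[OF orth lm])
  have bor: "Q' ` box l r \<in> sets borel"
    unfolding pre[symmetric] using meas by (rule measurable_sets_borel) simp
  have "emeasure (distr lborel borel (\<lambda>v. c2v (u * v2c v))) (box l r) = emeasure lborel (Q' ` box l r)"
    using meas by (subst emeasure_distr) (auto simp: pre)
  also have "\<dots> = ennreal (measure lborel (Q' ` box l r))"
    using lm' bor by (intro emeasure_eq_ennreal_measure) (auto simp: fmeasurable_def)
  also have "\<dots> = ennreal (measure lebesgue (Q' ` box l r))"
    using bor by (simp add: measure_completion)
  also have "\<dots> = ennreal (measure lebesgue (box l r))"
    by (simp add: measure_orthogonal_image[OF orth lm])
  also have "\<dots> = (\<Prod>b\<in>Basis. (r - l) \<bullet> b)"
  proof -
    have "measure lebesgue (box l r) = measure lborel (box l r)"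
      by (rule measure_completion) simp
    then show ?thesis using le by (simp add: measure_lborel_box_eq)
  qed
  finally show "emeasure (distr lborel borel (\<lambda>v. c2v (u * v2c v))) (box l r) = (\<Prod>b\<in>Basis. (r - l) \<bullet> b)" .
qed simp

lemma lborel_complex_rot:
  assumes "cmod u = 1"
  shows "distr (lborel :: complex measure) borel (\<lambda>z. u * z) = lborel"
proof -
  have "distr (lborel :: complex measure) borel (\<lambda>z. u * z) = distr (distr lborel borel v2c) borel (\<lambda>z. u * z)"
    by (simp flip: lborel_complex_v2)
  also have "\<dots> = distr lborel borel (\<lambda>v. u * v2c v)"
    by (subst distr_distr) (auto simp: o_def)
  also have "(\<lambda>v. u * v2c v) = v2c \<circ> (\<lambda>v. c2v (u * v2c v))"
    by (auto simp: fun_eq_iff)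
  also have "distr lborel borel (v2c \<circ> (\<lambda>v. c2v (u * v2c v))) =
      distr (distr lborel borel (\<lambda>v. c2v (u * v2c v))) borel v2c"
    by (subst distr_distr) auto
  also have "\<dots> = lborel"
    using lborel_v2_rot[OF assms] by (simp flip: lborel_complex_v2)
  finally show ?thesis .
qed

lemma unit_ball_vol_2: "unit_ball_vol 2 = pi"
proof -
  have "Gamma (2::real) = 1"
    using Gamma_fact[of 1] by simp
  then show ?thesis by (simp add: unit_ball_vol_def)
qed

lemma emeasure_ball_complex: "r \<ge> 0 \<Longrightarrow> emeasure lborel (ball (0::complex) r) = ennreal (pi * r\<^sup>2)"
  by (simp add: emeasure_ball unit_ball_vol_2)

lemma distr_negsq:
  "distr (lborel :: complex measure) borel (\<lambda>z. - (cmod z)\<^sup>2) =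
     density lborel (\<lambda>t. ennreal (pi * indicator {..0} t))"
proof (rule measure_eqI_lessThan)
  have pre: "(\<lambda>z::complex. - (cmod z)\<^sup>2) -` {x<..} = (if x < 0 then ball 0 (sqrt (-x)) else {})" for x
  proof (cases "x < 0")
    case True
    have "- (cmod z)\<^sup>2 > x \<longleftrightarrow> cmod z < sqrt (-x)" for z
    proof -
      have "cmod z < sqrt (-x) \<longleftrightarrow> sqrt ((cmod z)\<^sup>2) < sqrt (-x)" by simp
      also have "\<dots> \<longleftrightarrow> (cmod z)\<^sup>2 < -x" by (rule real_sqrt_less_iff)
      finally show ?thesis by linarith
    qed
    then show ?thesis using True by (auto simp: dist_norm)
  next
    case False
    have "\<not> (- (cmod z)\<^sup>2 > x)" for z :: complex
      using False by (smt (verit) zero_le_power2)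
    then show ?thesis using False by auto
  qed
  have E1: "emeasure (distr (lborel :: complex measure) borel (\<lambda>z. - (cmod z)\<^sup>2)) {x<..} =
      ennreal (pi * max 0 (-x))" for x
  proof -
    have "emeasure (distr (lborel :: complex measure) borel (\<lambda>z. - (cmod z)\<^sup>2)) {x<..} =
        emeasure lborel ((\<lambda>z::complex. - (cmod z)\<^sup>2) -` {x<..})"
      by (subst emeasure_distr) auto
    also have "\<dots> = ennreal (pi * max 0 (-x))"
      by (cases "x < 0") (auto simp: pre emeasure_ball_complex)
    finally show ?thesis .
  qed
  show "emeasure (distr (lborel :: complex measure) borel (\<lambda>z. - (cmod z)\<^sup>2)) {x<..} < \<infinity>" for x
    using E1 by simp
  show "emeasure (distr (lborel :: complex measure) borel (\<lambda>z. - (cmod z)\<^sup>2)) {x<..} =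
      emeasure (density lborel (\<lambda>t. ennreal (pi * indicator {..0} t))) {x<..}" for x
  proof -
    have "emeasure (density lborel (\<lambda>t. ennreal (pi * indicator {..0} t))) {x<..} =
        (\<integral>\<^sup>+t. ennreal pi * indicator ({x<..} \<inter> {..0}) t \<partial>lborel)"
      by (subst emeasure_density) (auto intro!: nn_integral_cong split: split_indicator simp: ennreal_mult)
    also have "\<dots> = ennreal pi * emeasure lborel ({x<..} \<inter> {..0})"
      by (subst nn_integral_cmult_indicator) auto
    also have "\<dots> = ennreal (pi * max 0 (-x))"
    proof (cases "x < 0")
      case True
      have "{x<..} \<inter> {..0} = {x<..0::real}" by auto
      then show ?thesis using True by (simp add: ennreal_mult[symmetric])
    next
      case False
      then have "{x<..} \<inter> {..0} = ({}::real set)" by auto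
      then show ?thesis using False by simp
    qed
    finally show ?thesis using E1 by simp
  qed
qed auto

lemma nn_integral_radial:
  fixes H :: "real \<Rightarrow> ennreal"
  assumes [measurable]: "H \<in> borel_measurable borel"
  shows "(\<integral>\<^sup>+z. H ((cmod z)\<^sup>2) \<partial>(lborel :: complex measure)) =
         (\<integral>\<^sup>+s. ennreal pi * indicator {0..} s * H s \<partial>lborel)"
proof -
  have "(\<integral>\<^sup>+z. H ((cmod z)\<^sup>2) \<partial>(lborel :: complex measure)) =
      (\<integral>\<^sup>+z. (\<lambda>t. H (-t)) (- (cmod z)\<^sup>2) \<partial>(lborel :: complex measure))"
    by simp
  also have "\<dots> = (\<integral>\<^sup>+t. H (-t) \<partial>distr (lborel :: complex measure) borel (\<lambda>z. - (cmod z)\<^sup>2))"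
    by (subst nn_integral_distr) auto
  also have "\<dots> = (\<integral>\<^sup>+t. ennreal (pi * indicator {..0} t) * H (-t) \<partial>lborel)"
    by (simp add: distr_negsq nn_integral_density)
  also have "\<dots> = (\<integral>\<^sup>+t. (\<lambda>s. ennreal pi * indicator {0..} s * H s) (-t) \<partial>lborel)"
    by (intro nn_integral_cong) (auto simp: ennreal_mult split: split_indicator)
  also have "\<dots> = (\<integral>\<^sup>+s. ennreal pi * indicator {0..} s * H s \<partial>distr lborel borel uminus)"
    by (subst nn_integral_distr) auto
  also have "\<dots> = (\<integral>\<^sup>+s. ennreal pi * indicator {0..} s * H s \<partial>lborel)"
    by (simp add: lborel_distr_uminus)
  finally show ?thesis .
qed

lemma borel_measurable_cnj [measurable]:
  "f \<in> borel_measurable M \<Longrightarrow> (\<lambda>x. cnj (f x :: complex)) \<in> borel_measurable M"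
proof -
  assume f: "f \<in> borel_measurable M"
  have "cnj \<in> borel_measurable (borel :: complex measure)"
    by (intro borel_measurable_continuous_onI continuous_intros)
  from measurable_compose[OF f this] show ?thesis by (simp add: o_def)
qed

definition wt :: "real \<Rightarrow> complex \<Rightarrow> real" where
  "wt \<alpha> z = (if cmod z < 1 then (\<alpha> + 1) / pi * (1 - (cmod z)\<^sup>2) powr \<alpha> else 0)"

lemma wt_nonneg: "\<alpha> > -1 \<Longrightarrow> 0 \<le> wt \<alpha> z"
  by (simp add: wt_def)

lemma wt_meas [measurable]: "wt \<alpha> \<in> borel_measurable borel"
  unfolding wt_def by measurable

lemma wt_rot: "cmod u = 1 \<Longrightarrow> wt \<alpha> (u * z) = wt \<alpha> z"
  by (simp add: wt_def norm_mult)

lemma mom_nn: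
  assumes a: "\<alpha> > -1"
  shows "(\<integral>\<^sup>+z. ennreal (wt \<alpha> z * (cmod z) ^ (2 * n)) \<partial>lborel) =
         ennreal ((\<alpha> + 1) * Beta (real n + 1) (\<alpha> + 1))"
proof -
  define H where "H s = ennreal (if s < 1 then (\<alpha> + 1) / pi * (1 - s) powr \<alpha> * s ^ n else 0)" for s :: real
  have Hm [measurable]: "H \<in> borel_measurable borel" unfolding H_def by measurable
  have eq1: "ennreal (wt \<alpha> z * (cmod z) ^ (2 * n)) = H ((cmod z)\<^sup>2)" for z :: complex
  proof -
    have "cmod z < 1 \<longleftrightarrow> (cmod z)\<^sup>2 < 1"
      by (metis abs_norm_cancel norm_ge_zero power2_less_imp_less real_sqrt_abs real_sqrt_less_iff real_sqrt_one)
    then show ?thesis by (simp add: H_def wt_def power_mult)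
  qed
  have "(\<integral>\<^sup>+z. ennreal (wt \<alpha> z * (cmod z) ^ (2 * n)) \<partial>lborel) = (\<integral>\<^sup>+z. H ((cmod z)\<^sup>2) \<partial>(lborel :: complex measure))"
    by (simp add: eq1)
  also have "\<dots> = (\<integral>\<^sup>+s. ennreal pi * indicator {0..} s * H s \<partial>lborel)"
    by (rule nn_integral_radial) simp
  also have "\<dots> = (\<integral>\<^sup>+s. ennreal (indicator {0..1} s * ((\<alpha> + 1) * (s powr real n * (1 - s) powr \<alpha>))) \<partial>lborel)"
  proof (rule nn_integral_cong_AE)
    show "AE s in lborel. ennreal pi * indicator {0..} s * H s =
        ennreal (indicator {0..1} s * ((\<alpha> + 1) * (s powr real n * (1 - s) powr \<alpha>)))"
      using AE_lborel_singleton[of 0]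
    proof eventually_elim
      case (elim s)
      show ?case
      proof (cases "0 \<le> s \<and> s < 1")
        case True
        then have "s > 0" using elim by auto
        then have "s powr real n = s ^ n" by (simp add: powr_realpow)
        then show ?thesis using True a
          by (simp add: H_def ennreal_mult[symmetric] indicator_def)
      next
        case False
        then show ?thesis by (auto simp: H_def indicator_def)
      qed
    qed
  qed
  also have "\<dots> = ennreal ((\<alpha> + 1) * Beta (real n + 1) (\<alpha> + 1))"
  proof (rule nn_integral_has_integral_lebesgue)
    show "0 \<le> (\<alpha> + 1) * (s powr real n * (1 - s) powr \<alpha>)" if "s \<in> {0..1}" for s
      using a by simp
    have "((\<lambda>t. t powr (real n + 1 - 1) * (1 - t) powr (\<alpha> + 1 - 1)) has_integral Beta (real n + 1) (\<alpha> + 1)) {0..1}"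
      using a by (intro has_integral_Beta_real) auto
    then show "((\<lambda>s. (\<alpha> + 1) * (s powr real n * (1 - s) powr \<alpha>)) has_integral (\<alpha> + 1) * Beta (real n + 1) (\<alpha> + 1)) {0..1}"
      by (intro has_integral_mult_right) simp
  qed
  finally show ?thesis .
qed

lemma Beta_mom_eq:
  assumes a: "\<alpha> > -1"
  shows "(\<alpha> + 1) * Beta (real n + 1) (\<alpha> + 1) = fact n / pochhammer (\<alpha> + 2) n"
proof -
  have np1: "\<alpha> + 1 \<notin> \<int>\<^sub>\<le>\<^sub>0" using a by (auto elim!: nonpos_Ints_cases)
  have np2: "\<alpha> + 2 \<notin> \<int>\<^sub>\<le>\<^sub>0" using a by (auto elim!: nonpos_Ints_cases)
  have g2: "Gamma (\<alpha> + 2) = (\<alpha> + 1) * Gamma (\<alpha> + 1)"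
    using Gamma_plus1[OF np1] by (simp add: add.assoc)
  have gf: "Gamma (real n + 1) = fact n"
    using Gamma_fact[of n] by (simp add: add.commute)
  have P: "pochhammer (\<alpha> + 2) n = Gamma (\<alpha> + 2 + real n) / Gamma (\<alpha> + 2)"
    using pochhammer_Gamma[OF np2] by simp
  have G2: "Gamma (\<alpha> + 2) > 0" using a by (intro Gamma_real_pos) simp
  have Gn: "Gamma (\<alpha> + 2 + real n) > 0" using a by (intro Gamma_real_pos) simp
  have s: "real n + 1 + (\<alpha> + 1) = \<alpha> + 2 + real n" by simp
  have "(\<alpha> + 1) * Beta (real n + 1) (\<alpha> + 1) = fact n * ((\<alpha> + 1) * Gamma (\<alpha> + 1)) / Gamma (\<alpha> + 2 + real n)"
    unfolding Beta_def s gf by simp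
  also have "\<dots> = fact n * Gamma (\<alpha> + 2) / Gamma (\<alpha> + 2 + real n)" by (simp only: g2)
  also have "\<dots> = fact n / pochhammer (\<alpha> + 2) n" using G2 Gn by (simp add: P)
  finally show ?thesis .
qed

lemma mom_integrable:
  assumes a: "\<alpha> > -1"
  shows "integrable lborel (\<lambda>z::complex. wt \<alpha> z * (cmod z) ^ (2 * n))"
    and "integral\<^sup>L lborel (\<lambda>z::complex. wt \<alpha> z * (cmod z) ^ (2 * n)) = fact n / pochhammer (\<alpha> + 2) n"
proof -
  have "pochhammer (\<alpha> + 2) n > 0" using a by (intro pochhammer_pos) simp
  then have nn: "0 \<le> (\<alpha> + 1) * Beta (real n + 1) (\<alpha> + 1)"
    using Beta_mom_eq[OF a, of n] by simp
  have "integrable lborel (\<lambda>z::complex. wt \<alpha> z * (cmod z) ^ (2 * n)) \<and>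
      integral\<^sup>L lborel (\<lambda>z::complex. wt \<alpha> z * (cmod z) ^ (2 * n)) = (\<alpha> + 1) * Beta (real n + 1) (\<alpha> + 1)"
    using mom_nn[OF a, of n] nn wt_nonneg[OF a]
    by (subst nn_integral_eq_integrable[symmetric]) auto
  then show "integrable lborel (\<lambda>z::complex. wt \<alpha> z * (cmod z) ^ (2 * n))"
    and "integral\<^sup>L lborel (\<lambda>z::complex. wt \<alpha> z * (cmod z) ^ (2 * n)) = fact n / pochhammer (\<alpha> + 2) n"
    using Beta_mom_eq[OF a] by auto
qed

lemma wt_integrable:
  assumes a: "\<alpha> > -1"
  shows "integrable lborel (wt \<alpha>)" and "integral\<^sup>L lborel (wt \<alpha>) = 1"
  using mom_integrable[OF a, of 0] by auto

lemma integral_rot: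
  fixes F :: "complex \<Rightarrow> 'b::{banach, second_countable_topology}"
  assumes u: "cmod u = 1" and [measurable]: "F \<in> borel_measurable borel"
  shows "integral\<^sup>L lborel (\<lambda>z. F (u * z)) = integral\<^sup>L lborel F"
proof -
  have "integral\<^sup>L lborel F = integral\<^sup>L (distr lborel borel (\<lambda>z. u * z)) F"
    by (simp add: lborel_complex_rot[OF u])
  also have "\<dots> = integral\<^sup>L lborel (\<lambda>z. F (u * z))"
    by (subst integral_distr) auto
  finally show ?thesis by simp
qed

lemma orth_radial:
  fixes G :: "real \<Rightarrow> real"
  assumes [measurable]: "G \<in> borel_measurable borel" and nm: "n \<noteq> m"
  shows "integral\<^sup>L lborel (\<lambda>z::complex. G (cmod z) *\<^sub>R (z ^ n * cnj z ^ m)) = 0"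
proof -
  define d where "d = (if n > m then n - m else m - n)"
  have d0: "d > 0" using nm by (auto simp: d_def)
  define u where "u = cis (pi / real d)"
  have u1: "cmod u = 1" by (simp add: u_def)
  have "real d * (pi / real d) = pi" using d0 by simp
  moreover have "u ^ d = cis (real d * (pi / real d))" unfolding u_def by (rule Complex.DeMoivre)
  ultimately have ud: "u ^ d = -1" by simp
  have cu: "cnj u * u = 1" by (simp add: u_def cis_cnj cis_mult)
  have key: "u ^ n * cnj u ^ m = -1"
  proof (cases "n > m")
    case True
    then have "n = d + m" by (simp add: d_def)
    then have "u ^ n * cnj u ^ m = u ^ d * (cnj u * u) ^ m"
      by (simp add: power_add power_mult_distrib mult_ac)
    then show ?thesis by (simp add: ud cu)
  next
    case False
    then have "m = d + n" using nm by (simp add: d_def)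
    then have "u ^ n * cnj u ^ m = cnj (u ^ d) * (cnj u * u) ^ n"
      by (simp add: power_add power_mult_distrib mult_ac)
    then show ?thesis by (simp add: ud cu)
  qed
  define F where "F z = G (cmod z) *\<^sub>R (z ^ n * cnj z ^ m)" for z :: complex
  have [measurable]: "F \<in> borel_measurable borel" unfolding F_def by measurable
  have "F (u * z) = - F z" for z
  proof -
    have "F (u * z) = G (cmod z) *\<^sub>R ((u ^ n * cnj u ^ m) * (z ^ n * cnj z ^ m))"
      by (simp add: F_def norm_mult u1 power_mult_distrib mult_ac)
    then show ?thesis by (simp add: key F_def)
  qed
  then have "integral\<^sup>L lborel F = - integral\<^sup>L lborel F"
    using integral_rot[OF u1, of F] by simp
  then have "integral\<^sup>L lborel F = 0" by simp
  then show ?thesis unfolding F_def .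
qed

lemma wt_out: "z \<notin> ball 0 1 \<Longrightarrow> wt \<alpha> z = 0"
  by (simp add: wt_def dist_norm)

lemma meas_cont_D:
  fixes F :: "complex \<Rightarrow> 'b::{banach, second_countable_topology}"
  assumes F: "continuous_on (ball 0 1) F" and g[measurable]: "g \<in> borel_measurable borel"
    and g0: "\<And>z. z \<notin> ball 0 1 \<Longrightarrow> g z = 0"
  shows "(\<lambda>z. g z *\<^sub>R F z) \<in> borel_measurable borel"
proof -
  have "F \<in> borel_measurable (restrict_space borel (ball 0 1))"
    by (rule borel_measurable_continuous_on_restrict) fact
  then have [measurable]: "(\<lambda>z. indicator (ball 0 1) z *\<^sub>R F z) \<in> borel_measurable borel"
    by (subst borel_measurable_restrict_space_iff[symmetric]) auto
  have eq: "(\<lambda>z. g z *\<^sub>R F z) = (\<lambda>z. g z *\<^sub>R (indicator (ball 0 1) z *\<^sub>R F z))"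
    using g0 by (auto simp: fun_eq_iff indicator_def)
  have m2: "(\<lambda>z. g z *\<^sub>R (indicator (ball 0 1) z *\<^sub>R F z)) \<in> borel_measurable borel"
    by (rule borel_measurable_scaleR) measurable
  show ?thesis by (subst eq) (rule m2)
qed

definition tay :: "(complex \<Rightarrow> complex) \<Rightarrow> nat \<Rightarrow> complex" where
  "tay f n = (deriv ^^ n) f 0 / fact n"

lemma tay_sums: "f holomorphic_on ball 0 1 \<Longrightarrow> z \<in> ball 0 1 \<Longrightarrow> (\<lambda>n. tay f n * z ^ n) sums f z"
  using holomorphic_power_series[of f 0 1 z] by (simp add: tay_def)

lemma tay_abs:
  assumes f: "f holomorphic_on ball 0 1" and r: "0 \<le> r" "r < 1"
  shows "summable (\<lambda>n. norm (tay f n) * r ^ n)"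
proof -
  define x where "x = complex_of_real ((1 + r) / 2)"
  have "norm x = (1 + r) / 2" unfolding x_def by (subst norm_of_real) (use r in simp)
  then have "x \<in> ball 0 1" using r by simp
  then have "summable (\<lambda>n. tay f n * x ^ n)"
    using tay_sums[OF f] sums_summable by blast
  moreover have "norm (complex_of_real r) < norm x" using r \<open>norm x = (1 + r) / 2\<close> by simp
  ultimately have "summable (\<lambda>n. norm (tay f n * complex_of_real r ^ n))"
    by (rule powser_insidea)
  then show ?thesis using r by (simp add: norm_mult norm_power)
qed

lemma bounded_on_cball:
  assumes "continuous_on (ball 0 1) (f :: complex \<Rightarrow> complex)" "0 \<le> r" "r < 1"
  obtains B where "B \<ge> 0" "\<And>z. cmod z \<le> r \<Longrightarrow> cmod (f z) \<le> B"
proof -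
  have "cball 0 r \<subseteq> ball (0::complex) 1" using assms by auto
  then have "continuous_on (cball 0 r) f" using assms(1) continuous_on_subset by blast
  then have "bounded (f ` cball 0 r)" by (intro compact_imp_bounded compact_continuous_image) auto
  then obtain B where B: "\<And>y. y \<in> f ` cball 0 r \<Longrightarrow> norm y \<le> B" by (auto simp: bounded_iff)
  show ?thesis
  proof (rule that[of "max B 0"])
    show "cmod (f z) \<le> max B 0" if "cmod z \<le> r" for z
      using B[of "f z"] that by fastforce
  qed simp
qed

definition Wr :: "real \<Rightarrow> real \<Rightarrow> complex \<Rightarrow> real" where
  "Wr \<alpha> r z = indicator (ball 0 r) z * wt \<alpha> z"

lemma Wr_meas [measurable]: "Wr \<alpha> r \<in> borel_measurable borel"
proof -
  have "(\<lambda>z. indicator (ball (0::complex) r) z * wt \<alpha> z) \<in> borel_measurable borel"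
    by (intro borel_measurable_times borel_measurable_indicator wt_meas) auto
  then show ?thesis by (simp add: Wr_def[abs_def])
qed

lemma Wr_nonneg: "\<alpha> > -1 \<Longrightarrow> 0 \<le> Wr \<alpha> r z"
  by (simp add: Wr_def wt_nonneg)

lemma Wr_le: "\<alpha> > -1 \<Longrightarrow> Wr \<alpha> r z \<le> wt \<alpha> z"
  by (simp add: Wr_def wt_nonneg indicator_def)

lemma Wr_out: "r \<le> 1 \<Longrightarrow> cmod z \<ge> r \<Longrightarrow> Wr \<alpha> r z = 0"
  by (simp add: Wr_def indicator_def)

lemma Wr_radial: "Wr \<alpha> r z = (\<lambda>t. if t < r then (if t < 1 then (\<alpha> + 1) / pi * (1 - t\<^sup>2) powr \<alpha> else 0) else 0) (cmod z)"
  by (simp add: Wr_def wt_def indicator_def)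

lemma integrable_wt_bound:
  fixes g :: "complex \<Rightarrow> 'b::{banach, second_countable_topology}"
  assumes a: "\<alpha> > -1" and [measurable]: "g \<in> borel_measurable borel"
    and b: "\<And>z. norm (g z) \<le> C * wt \<alpha> z"
  shows "integrable lborel g"
proof (rule Bochner_Integration.integrable_bound)
  show "integrable lborel (\<lambda>z. C * wt \<alpha> z)"
    using wt_integrable(1)[OF a] by simp
  show "AE z in lborel. norm (g z) \<le> norm (C * wt \<alpha> z)"
    using b by (auto intro: order_trans[OF _ abs_ge_self])
qed simp

lemma series_moment:
  assumes a: "\<alpha> > -1" and f: "f holomorphic_on ball 0 1" and r: "0 \<le> r" "r < 1"
  shows "integral\<^sup>L lborel (\<lambda>z. Wr \<alpha> r z *\<^sub>R (f z * cnj z ^ m)) =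
         tay f m * of_real (integral\<^sup>L lborel (\<lambda>z. Wr \<alpha> r z * (cmod z) ^ (2 * m)))"
proof -
  have fc: "continuous_on (ball 0 1) f" using f holomorphic_on_imp_continuous_on by blast
  define g where "g n z = tay f n * (Wr \<alpha> r z *\<^sub>R (z ^ n * cnj z ^ m))" for n z
  have gm [measurable]: "g n \<in> borel_measurable borel" for n
    unfolding g_def by measurable
  have gb: "norm (g n z) \<le> (norm (tay f n) * r ^ n * r ^ m) * wt \<alpha> z" for n z
  proof (cases "cmod z < r")
    case True
    have "norm (g n z) = norm (tay f n) * Wr \<alpha> r z * (cmod z ^ n * cmod z ^ m)"
      using Wr_nonneg[OF a] by (simp add: g_def norm_mult norm_power)
    also have "\<dots> \<le> norm (tay f n) * wt \<alpha> z * (r ^ n * r ^ m)"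
      using True r Wr_le[OF a] Wr_nonneg[OF a] wt_nonneg[OF a]
      by (intro mult_mono power_mono) (auto simp: mult_nonneg_nonneg zero_le_power)
    finally show ?thesis by (simp add: mult_ac)
  next
    case False
    then have "g n z = 0" using r by (simp add: g_def Wr_out)
    then show ?thesis using wt_nonneg[OF a, of z] r by simp
  qed
  have gi: "integrable lborel (g n)" for n
    using gb by (intro integrable_wt_bound[OF a]) auto
  have sumpt: "summable (\<lambda>n. norm (g n z))" for z
  proof (rule summable_comparison_test')
    show "summable (\<lambda>n. (norm (tay f n) * r ^ n) * (r ^ m * wt \<alpha> z))"
      by (intro summable_mult2 tay_abs[OF f r])
    show "norm (norm (g n z)) \<le> (norm (tay f n) * r ^ n) * (r ^ m * wt \<alpha> z)" for n
      using gb[of n z] by (simp add: mult_ac)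
  qed
  have sumint: "summable (\<lambda>n. integral\<^sup>L lborel (\<lambda>z. norm (g n z)))"
  proof (rule summable_comparison_test')
    show "summable (\<lambda>n. (norm (tay f n) * r ^ n) * r ^ m)"
      by (intro summable_mult2 tay_abs[OF f r])
    show "norm (integral\<^sup>L lborel (\<lambda>z. norm (g n z))) \<le> (norm (tay f n) * r ^ n) * r ^ m" for n
    proof -
      have "integral\<^sup>L lborel (\<lambda>z. norm (g n z)) \<le> integral\<^sup>L lborel (\<lambda>z. (norm (tay f n) * r ^ n * r ^ m) * wt \<alpha> z)"
        using gi gb wt_integrable(1)[OF a] by (intro integral_mono) auto
      also have "\<dots> = norm (tay f n) * r ^ n * r ^ m"
        using wt_integrable(2)[OF a] by simp
      finally show ?thesis by simp
    qed
  qed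
  have sumeq: "(\<Sum>n. g n z) = Wr \<alpha> r z *\<^sub>R (f z * cnj z ^ m)" for z
  proof (cases "cmod z < r")
    case True
    then have "z \<in> ball 0 1" using r by simp
    from sums_mult2[OF tay_sums[OF f this], of "Wr \<alpha> r z *\<^sub>R cnj z ^ m"]
    have "(\<lambda>n. g n z) sums (Wr \<alpha> r z *\<^sub>R (f z * cnj z ^ m))"
      by (simp add: g_def mult_ac scaleR_conv_of_real)
    then show ?thesis by (simp add: sums_iff)
  next
    case False
    then show ?thesis using r by (simp add: g_def Wr_out)
  qed
  have ig: "integral\<^sup>L lborel (g n) = (if n = m then tay f m * of_real (integral\<^sup>L lborel (\<lambda>z. Wr \<alpha> r z * (cmod z) ^ (2 * m))) else 0)" for n
  proof (cases "n = m")
    case True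
    have "g n z = tay f m * of_real (Wr \<alpha> r z * (cmod z) ^ (2 * m))" for z
    proof -
      have "z ^ m * cnj z ^ m = of_real ((cmod z) ^ (2 * m))"
        by (simp add: power_mult_distrib[symmetric] complex_norm_square[symmetric] power_mult)
      then show ?thesis using True by (simp add: g_def scaleR_conv_of_real)
    qed
    then have "g n = (\<lambda>z. tay f m * of_real (Wr \<alpha> r z * (cmod z) ^ (2 * m)))"
      by (intro ext)
    then have "integral\<^sup>L lborel (g n) = integral\<^sup>L lborel (\<lambda>z. tay f m * of_real (Wr \<alpha> r z * (cmod z) ^ (2 * m)))"
      by (simp only:)
    also have "\<dots> = tay f m * of_real (integral\<^sup>L lborel (\<lambda>z. Wr \<alpha> r z * (cmod z) ^ (2 * m)))"
      by (simp only: integral_mult_right_zero integral_complex_of_real)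
    finally show ?thesis using True by simp
  next
    case False
    define G where "G t = (if t < r then (if t < 1 then (\<alpha> + 1) / pi * (1 - t\<^sup>2) powr \<alpha> else 0) else 0)" for t :: real
    have [measurable]: "G \<in> borel_measurable borel" unfolding G_def by measurable
    have "g n = (\<lambda>z. tay f n * (G (cmod z) *\<^sub>R (z ^ n * cnj z ^ m)))"
      by (simp add: fun_eq_iff g_def G_def Wr_radial)
    then have "integral\<^sup>L lborel (g n) = tay f n * integral\<^sup>L lborel (\<lambda>z. G (cmod z) *\<^sub>R (z ^ n * cnj z ^ m))"
      by (simp only: integral_mult_right_zero)
    also have "\<dots> = 0" using orth_radial[of G n m] False by simp
    finally show ?thesis using False by simp
  qed
  have "integral\<^sup>L lborel (\<lambda>z. Wr \<alpha> r z *\<^sub>R (f z * cnj z ^ m)) = integral\<^sup>L lborel (\<lambda>z. \<Sum>n. g n z)"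
    by (simp add: sumeq)
  also have "\<dots> = (\<Sum>n. integral\<^sup>L lborel (g n))"
    by (rule integral_suminf[OF gi _ sumint]) (simp add: sumpt)
  also have "\<dots> = tay f m * of_real (integral\<^sup>L lborel (\<lambda>z. Wr \<alpha> r z * (cmod z) ^ (2 * m)))"
    unfolding ig using sums_single[of m "\<lambda>_. tay f m * of_real (integral\<^sup>L lborel (\<lambda>z. Wr \<alpha> r z * (cmod z) ^ (2 * m)))"]
    by (simp add: sums_iff)
  finally show ?thesis .
qed

definition bco :: "real \<Rightarrow> nat \<Rightarrow> real" where
  "bco \<alpha> n = pochhammer (\<alpha> + 2) n / fact n"

lemma bco_pos: "\<alpha> > -1 \<Longrightarrow> bco \<alpha> n > 0"
  unfolding bco_def by (intro divide_pos_pos pochhammer_pos) auto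

lemma bco_mom: "\<alpha> > -1 \<Longrightarrow> bco \<alpha> n * (fact n / pochhammer (\<alpha> + 2) n) = 1"
  unfolding bco_def using pochhammer_pos[of "\<alpha> + 2" n] by simp

lemma kern_series:
  assumes "norm (cnj w * z) < 1"
  shows "(\<lambda>n. of_real (bco \<alpha> n) * (cnj w * z) ^ n) sums bergman_kernel \<alpha> w z"
proof -
  define A where "A = complex_of_real \<alpha> + 2"
  have "(\<lambda>n. ((- A) gchoose n) * (- (cnj w * z)) ^ n) sums (1 + - (cnj w * z)) powr (- A)"
    using assms by (intro gen_binomial_complex) simp
  moreover have "((- A) gchoose n) * (- (cnj w * z)) ^ n = of_real (bco \<alpha> n) * (cnj w * z) ^ n" for n
  proof -
    have pA: "pochhammer A n = of_real (pochhammer (\<alpha> + 2) n)"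
      unfolding A_def using pochhammer_of_real[of "\<alpha> + 2" n] by simp
    have g: "(- A) gchoose n = (-1) ^ n * pochhammer A n / fact n"
      by (simp add: gbinomial_pochhammer)
    have "((- A) gchoose n) * (- (cnj w * z)) ^ n = ((-1) ^ n * pochhammer A n / fact n) * ((-1) ^ n * (cnj w * z) ^ n)"
      by (simp only: g power_minus[of "cnj w * z"])
    also have "\<dots> = ((-1) ^ n * (-1) ^ n) * (pochhammer A n / fact n) * (cnj w * z) ^ n"
      by (simp add: field_simps)
    also have "(-1::complex) ^ n * (-1) ^ n = 1"
      by (simp add: power_add[symmetric])
    finally show ?thesis by (simp add: pA bco_def)
  qed
  ultimately show ?thesis by (simp add: bergman_kernel_def A_def)
qed

lemma kern_re_pos:
  assumes "cmod w < 1" "cmod z < 1"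
  shows "Re (1 - cnj w * z) > 0"
proof -
  have "Re (cnj w * z) \<le> cmod (cnj w * z)" by (rule complex_Re_le_cmod)
  also have "\<dots> = cmod w * cmod z" by (simp add: norm_mult)
  also have "\<dots> \<le> cmod w * 1" using assms by (intro mult_left_mono) auto
  also have "\<dots> < 1" using assms by simp
  finally show ?thesis by simp
qed

lemma kern_holo:
  assumes "cmod w < 1"
  shows "bergman_kernel \<alpha> w holomorphic_on ball 0 1"
proof -
  have "(\<lambda>z. (1 - cnj w * z) powr (- (of_real \<alpha> + 2))) holomorphic_on ball 0 1"
  proof (intro holomorphic_intros)
    fix z :: complex assume "z \<in> ball 0 1"
    then have "Re (1 - cnj w * z) > 0" using assms kern_re_pos by simp
    then show "1 - cnj w * z \<notin> \<real>\<^sub>\<le>\<^sub>0" by (auto simp: complex_nonpos_Reals_iff)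
  qed
  then show ?thesis by (simp add: bergman_kernel_def[abs_def])
qed

lemma kern_cont: "cmod w < 1 \<Longrightarrow> continuous_on (ball 0 1) (bergman_kernel \<alpha> w)"
  using kern_holo holomorphic_on_imp_continuous_on by blast

lemma bco_summable:
  assumes "0 \<le> x" "x < 1"
  shows "summable (\<lambda>n. bco \<alpha> n * x ^ n)"
proof -
  have "norm (cnj (complex_of_real (sqrt x)) * complex_of_real (sqrt x)) < 1"
    using assms by (simp add: norm_mult)
  note ks = sums_summable[OF kern_series[OF this, of \<alpha>]]
  have sx: "complex_of_real (sqrt x) * complex_of_real (sqrt x) = complex_of_real x"
    using assms by (simp flip: of_real_mult)
  from ks have "summable (\<lambda>n. complex_of_real (bco \<alpha> n) * complex_of_real x ^ n)"
    using assms by (simp add: sx)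
  then have "summable (\<lambda>n. complex_of_real (bco \<alpha> n * x ^ n))"
    by (simp only: of_real_mult of_real_power)
  then show ?thesis by (simp only: summable_complex_of_real)
qed

definition rj :: "nat \<Rightarrow> real" where "rj j = 1 - 1 / (real j + 2)"

lemma rj_bounds: "0 \<le> rj j" "rj j < 1"
  by (auto simp: rj_def field_simps)

lemma rj_lim: "rj \<longlonglongrightarrow> 1"
proof -
  have "(\<lambda>j. 1 / (real j + 2)) \<longlonglongrightarrow> 0"
    by real_asymp
  from tendsto_diff[OF tendsto_const[of 1] this] show ?thesis by (simp add: rj_def[abs_def])
qed

lemma rj_event: "x < 1 \<Longrightarrow> eventually (\<lambda>j. x < rj j) sequentially"
  using rj_lim by (rule order_tendstoD)

lemma Wr_event: "eventually (\<lambda>j. Wr \<alpha> (rj j) z = wt \<alpha> z) sequentially"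
proof (cases "cmod z < 1")
  case True
  show ?thesis using rj_event[OF True]
    by eventually_elim (simp add: Wr_def indicator_def)
next
  case False
  then show ?thesis by (simp add: Wr_def wt_def)
qed

definition Mr :: "real \<Rightarrow> real \<Rightarrow> nat \<Rightarrow> real" where
  "Mr \<alpha> r n = integral\<^sup>L lborel (\<lambda>z. Wr \<alpha> r z * (cmod z) ^ (2 * n))"

lemma Wr_mom_integrable:
  assumes a: "\<alpha> > -1"
  shows "integrable lborel (\<lambda>z. Wr \<alpha> r z * (cmod z) ^ (2 * n))"
proof (rule Bochner_Integration.integrable_bound[OF mom_integrable(1)[OF a, of n]])
  show "AE z in lborel. norm (Wr \<alpha> r z * cmod z ^ (2 * n)) \<le> norm (wt \<alpha> z * cmod z ^ (2 * n))"
    using Wr_le[OF a] Wr_nonneg[OF a] wt_nonneg[OF a]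
    by (auto intro!: mult_right_mono simp: abs_mult)
qed simp

lemma Mr_bounds:
  assumes a: "\<alpha> > -1"
  shows "0 \<le> Mr \<alpha> r n" "Mr \<alpha> r n \<le> fact n / pochhammer (\<alpha> + 2) n"
proof -
  show "0 \<le> Mr \<alpha> r n" unfolding Mr_def
    using Wr_nonneg[OF a] by (intro integral_nonneg_AE) auto
  have "Mr \<alpha> r n \<le> integral\<^sup>L lborel (\<lambda>z::complex. wt \<alpha> z * (cmod z) ^ (2 * n))"
    unfolding Mr_def using Wr_le[OF a]
    by (intro integral_mono Wr_mom_integrable[OF a] mom_integrable(1)[OF a] mult_right_mono) auto
  then show "Mr \<alpha> r n \<le> fact n / pochhammer (\<alpha> + 2) n"
    using mom_integrable(2)[OF a] by simp
qed

lemma Mr_lim: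
  assumes a: "\<alpha> > -1"
  shows "(\<lambda>j. Mr \<alpha> (rj j) n) \<longlonglongrightarrow> fact n / pochhammer (\<alpha> + 2) n"
proof -
  have "(\<lambda>j. integral\<^sup>L lborel (\<lambda>z. Wr \<alpha> (rj j) z * (cmod z) ^ (2 * n))) \<longlonglongrightarrow>
      integral\<^sup>L lborel (\<lambda>z::complex. wt \<alpha> z * (cmod z) ^ (2 * n))"
  proof (rule integral_dominated_convergence[where w = "\<lambda>z. wt \<alpha> z * (cmod z) ^ (2 * n)"])
    show "integrable lborel (\<lambda>z::complex. wt \<alpha> z * (cmod z) ^ (2 * n))"
      by (rule mom_integrable(1)[OF a])
    show "AE z in lborel. (\<lambda>j. Wr \<alpha> (rj j) z * (cmod z) ^ (2 * n)) \<longlonglongrightarrow> wt \<alpha> z * (cmod z) ^ (2 * n)"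
    proof (intro AE_I2)
      fix z :: complex
      show "(\<lambda>j. Wr \<alpha> (rj j) z * (cmod z) ^ (2 * n)) \<longlonglongrightarrow> wt \<alpha> z * (cmod z) ^ (2 * n)"
        by (rule tendsto_eventually) (use Wr_event[of \<alpha> z] in eventually_elim, simp)
    qed
    show "AE z in lborel. norm (Wr \<alpha> (rj j) z * (cmod z) ^ (2 * n)) \<le> wt \<alpha> z * (cmod z) ^ (2 * n)" for j
      using Wr_le[OF a] Wr_nonneg[OF a] by (auto intro!: mult_right_mono simp: abs_mult)
  qed auto
  then show ?thesis using mom_integrable(2)[OF a] by (simp add: Mr_def)
qed

lemma step_r:
  assumes a: "\<alpha> > -1" and f: "f holomorphic_on ball 0 1" and w: "w \<in> ball 0 1"
    and r: "0 \<le> r" "r < 1"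
  shows "integral\<^sup>L lborel (\<lambda>z. Wr \<alpha> r z *\<^sub>R (f z * cnj (bergman_kernel \<alpha> w z))) =
         (\<Sum>n. tay f n * w ^ n * of_real (bco \<alpha> n * Mr \<alpha> r n))"
proof -
  have fc: "continuous_on (ball 0 1) f" using f holomorphic_on_imp_continuous_on by blast
  obtain B where B0: "B \<ge> 0" and B: "\<And>z. cmod z \<le> r \<Longrightarrow> cmod (f z) \<le> B"
    using bounded_on_cball[OF fc r] by blast
  have cw: "cmod w < 1" using w by simp
  define h where "h n z = (Wr \<alpha> r z *\<^sub>R (f z * cnj z ^ n)) * (of_real (bco \<alpha> n) * w ^ n)" for n z
  have Wr0: "Wr \<alpha> r z = 0" if "z \<notin> ball 0 1" for z
    using that r by (intro Wr_out) auto
  have hm [measurable]: "h n \<in> borel_measurable borel" for n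
  proof -
    have "(\<lambda>z. Wr \<alpha> r z *\<^sub>R (f z * cnj z ^ n)) \<in> borel_measurable borel"
      using Wr0 by (intro meas_cont_D continuous_intros fc) auto
    then show ?thesis unfolding h_def by measurable
  qed
  have hb: "norm (h n z) \<le> (B * (bco \<alpha> n * (cmod w * r) ^ n)) * wt \<alpha> z" for n z
  proof (cases "cmod z < r")
    case True
    have "norm (h n z) = Wr \<alpha> r z * (cmod (f z) * cmod z ^ n) * (bco \<alpha> n * cmod w ^ n)"
      using Wr_nonneg[OF a, of r z] bco_pos[OF a, of n] by (simp add: h_def norm_mult norm_power)
    also have "\<dots> \<le> wt \<alpha> z * (B * r ^ n) * (bco \<alpha> n * cmod w ^ n)"
      using True Wr_le[OF a] Wr_nonneg[OF a] wt_nonneg[OF a] bco_pos[OF a, of n] B[of z] B0 r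
      by (intro mult_mono power_mono mult_nonneg_nonneg) auto
    finally show ?thesis by (simp add: mult_ac power_mult_distrib)
  next
    case False
    then have "h n z = 0" using r by (simp add: h_def Wr_out)
    then show ?thesis using wt_nonneg[OF a, of z] bco_pos[OF a, of n] B0 r by simp
  qed
  have sx: "summable (\<lambda>n. bco \<alpha> n * (cmod w * r) ^ n)"
    using cw r by (intro bco_summable) (auto intro: mult_le_one order.strict_trans1[of _ "cmod w"] simp: mult_left_le)
  have hi: "integrable lborel (h n)" for n
    using hb by (intro integrable_wt_bound[OF a]) auto
  have sumpt: "summable (\<lambda>n. norm (h n z))" for z
  proof (rule summable_comparison_test')
    show "summable (\<lambda>n. (bco \<alpha> n * (cmod w * r) ^ n) * (B * wt \<alpha> z))"
      by (intro summable_mult2 sx)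
    show "norm (norm (h n z)) \<le> (bco \<alpha> n * (cmod w * r) ^ n) * (B * wt \<alpha> z)" for n
      using hb[of n z] by (simp add: mult_ac)
  qed
  have sumint: "summable (\<lambda>n. integral\<^sup>L lborel (\<lambda>z. norm (h n z)))"
  proof (rule summable_comparison_test')
    show "summable (\<lambda>n. (bco \<alpha> n * (cmod w * r) ^ n) * B)"
      by (intro summable_mult2 sx)
    show "norm (integral\<^sup>L lborel (\<lambda>z. norm (h n z))) \<le> (bco \<alpha> n * (cmod w * r) ^ n) * B" for n
    proof -
      have "integral\<^sup>L lborel (\<lambda>z. norm (h n z)) \<le> integral\<^sup>L lborel (\<lambda>z. (B * (bco \<alpha> n * (cmod w * r) ^ n)) * wt \<alpha> z)"
        using hi hb wt_integrable(1)[OF a] by (intro integral_mono) auto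
      also have "\<dots> = B * (bco \<alpha> n * (cmod w * r) ^ n)"
        using wt_integrable(2)[OF a] by simp
      finally show ?thesis by (simp add: mult_ac)
    qed
  qed
  have sumeq: "(\<Sum>n. h n z) = Wr \<alpha> r z *\<^sub>R (f z * cnj (bergman_kernel \<alpha> w z))" for z
  proof (cases "cmod z < r")
    case True
    have "norm (cnj w * z) < 1"
    proof -
      have "norm (cnj w * z) = cmod w * cmod z" by (simp add: norm_mult)
      also have "\<dots> \<le> 1 * cmod z" using cw by (intro mult_right_mono) auto
      also have "\<dots> < 1" using True r by simp
      finally show ?thesis .
    qed
    from kern_series[OF this, of \<alpha>]
    have "(\<lambda>n. cnj (of_real (bco \<alpha> n) * (cnj w * z) ^ n)) sums cnj (bergman_kernel \<alpha> w z)"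
      by (simp only: sums_cnj)
    from sums_mult[OF this, of "Wr \<alpha> r z *\<^sub>R f z"]
    have "(\<lambda>n. h n z) sums (Wr \<alpha> r z *\<^sub>R (f z * cnj (bergman_kernel \<alpha> w z)))"
      by (simp add: h_def scaleR_conv_of_real power_mult_distrib mult_ac)
    then show ?thesis by (simp add: sums_iff)
  next
    case False
    then show ?thesis using r by (simp add: h_def Wr_out)
  qed
  have ih: "integral\<^sup>L lborel (h n) = tay f n * w ^ n * of_real (bco \<alpha> n * Mr \<alpha> r n)" for n
  proof -
    have "integral\<^sup>L lborel (h n) = integral\<^sup>L lborel (\<lambda>z. Wr \<alpha> r z *\<^sub>R (f z * cnj z ^ n)) * (of_real (bco \<alpha> n) * w ^ n)"
      unfolding h_def by (rule integral_mult_left_zero)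
    also have "\<dots> = tay f n * of_real (Mr \<alpha> r n) * (of_real (bco \<alpha> n) * w ^ n)"
      by (simp only: series_moment[OF a f r] Mr_def)
    finally show ?thesis by (simp add: mult_ac)
  qed
  have "integral\<^sup>L lborel (\<lambda>z. Wr \<alpha> r z *\<^sub>R (f z * cnj (bergman_kernel \<alpha> w z))) = integral\<^sup>L lborel (\<lambda>z. \<Sum>n. h n z)"
    by (simp add: sumeq)
  also have "\<dots> = (\<Sum>n. integral\<^sup>L lborel (h n))"
    by (rule integral_suminf[OF hi _ sumint]) (simp add: sumpt)
  also have "\<dots> = (\<Sum>n. tay f n * w ^ n * of_real (bco \<alpha> n * Mr \<alpha> r n))"
    by (simp only: ih)
  finally show ?thesis .
qed

lemma reproducing_lborel:
  assumes a: "\<alpha> > -1" and f: "f holomorphic_on ball 0 1" and w: "w \<in> ball 0 1"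
    and int: "integrable lborel (\<lambda>z. wt \<alpha> z *\<^sub>R (f z * cnj (bergman_kernel \<alpha> w z)))"
  shows "integral\<^sup>L lborel (\<lambda>z. wt \<alpha> z *\<^sub>R (f z * cnj (bergman_kernel \<alpha> w z))) = f w"
proof -
  define F where "F z = f z * cnj (bergman_kernel \<alpha> w z)" for z
  have cw: "cmod w < 1" using w by simp
  have Fc: "continuous_on (ball 0 1) F" unfolding F_def using f kern_cont[OF cw]
    by (intro continuous_intros) (auto intro: holomorphic_on_imp_continuous_on)
  have L1: "(\<lambda>j. integral\<^sup>L lborel (\<lambda>z. Wr \<alpha> (rj j) z *\<^sub>R F z)) \<longlonglongrightarrow> integral\<^sup>L lborel (\<lambda>z. wt \<alpha> z *\<^sub>R F z)"
  proof (rule integral_dominated_convergence[where w = "\<lambda>z. norm (wt \<alpha> z *\<^sub>R F z)"])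
    show "integrable lborel (\<lambda>z. norm (wt \<alpha> z *\<^sub>R F z))"
      using int unfolding F_def by (rule integrable_norm)
    show "(\<lambda>z. wt \<alpha> z *\<^sub>R F z) \<in> borel_measurable lborel"
      using meas_cont_D[OF Fc wt_meas wt_out] by simp
    show "(\<lambda>z. Wr \<alpha> (rj j) z *\<^sub>R F z) \<in> borel_measurable lborel" for j
    proof -
      have "Wr \<alpha> (rj j) z = 0" if "z \<notin> ball 0 1" for z
        using that rj_bounds[of j] by (intro Wr_out) auto
      then show ?thesis using meas_cont_D[OF Fc Wr_meas] by simp
    qed
    show "AE z in lborel. (\<lambda>j. Wr \<alpha> (rj j) z *\<^sub>R F z) \<longlonglongrightarrow> wt \<alpha> z *\<^sub>R F z"
    proof (intro AE_I2)
      fix z :: complex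
      show "(\<lambda>j. Wr \<alpha> (rj j) z *\<^sub>R F z) \<longlonglongrightarrow> wt \<alpha> z *\<^sub>R F z"
        by (rule tendsto_eventually) (use Wr_event[of \<alpha> z] in \<open>eventually_elim, simp\<close>)
    qed
    show "AE z in lborel. norm (Wr \<alpha> (rj j) z *\<^sub>R F z) \<le> norm (wt \<alpha> z *\<^sub>R F z)" for j
      using Wr_le[OF a] Wr_nonneg[OF a] wt_nonneg[OF a] by (auto intro!: mult_right_mono)
  qed
  have L2: "(\<lambda>j. \<Sum>n. tay f n * w ^ n * of_real (bco \<alpha> n * Mr \<alpha> (rj j) n)) \<longlonglongrightarrow> (\<Sum>n. tay f n * w ^ n)"
  proof -
    have lim: "(\<lambda>j. tay f k * w ^ k * of_real (bco \<alpha> k * Mr \<alpha> (rj j) k)) \<longlonglongrightarrow> tay f k * w ^ k" for k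
    proof -
      have "(\<lambda>j. bco \<alpha> k * Mr \<alpha> (rj j) k) \<longlonglongrightarrow> bco \<alpha> k * (fact k / pochhammer (\<alpha> + 2) k)"
        by (intro tendsto_mult_left Mr_lim[OF a])
      then have "(\<lambda>j. bco \<alpha> k * Mr \<alpha> (rj j) k) \<longlonglongrightarrow> 1" by (simp only: bco_mom[OF a])
      then have "(\<lambda>j. complex_of_real (bco \<alpha> k * Mr \<alpha> (rj j) k)) \<longlonglongrightarrow> 1"
        using tendsto_of_real by fastforce
      then show ?thesis using tendsto_mult_left by fastforce
    qed
    have bnd: "norm (tay f k * w ^ k * of_real (bco \<alpha> k * Mr \<alpha> (rj j) k)) \<le> norm (tay f k) * cmod w ^ k" for k j
    proof -
      have "0 \<le> bco \<alpha> k * Mr \<alpha> (rj j) k"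
        using bco_pos[OF a, of k] Mr_bounds(1)[OF a] by simp
      moreover have "bco \<alpha> k * Mr \<alpha> (rj j) k \<le> 1"
        using bco_pos[OF a, of k] Mr_bounds(2)[OF a, of "rj j" k] bco_mom[OF a, of k]
        by (metis mult_left_mono less_imp_le)
      ultimately show ?thesis
        by (simp add: norm_mult norm_power mult_left_le)
    qed
    have "summable (\<lambda>k. norm (tay f k) * cmod w ^ k)"
      using tay_abs[OF f] cw by simp
    from tannerys_theorem[where a = "\<lambda>k j. tay f k * w ^ k * of_real (bco \<alpha> k * Mr \<alpha> (rj j) k)"
        and b = "\<lambda>k. tay f k * w ^ k" and M = "\<lambda>k. norm (tay f k) * cmod w ^ k" and F = sequentially,
        OF lim _ this]
    show ?thesis using bnd by (auto intro: always_eventually)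
  qed
  have eq: "integral\<^sup>L lborel (\<lambda>z. Wr \<alpha> (rj j) z *\<^sub>R F z) = (\<Sum>n. tay f n * w ^ n * of_real (bco \<alpha> n * Mr \<alpha> (rj j) n))" for j
    unfolding F_def using step_r[OF a f w rj_bounds] .
  have fw: "(\<Sum>n. tay f n * w ^ n) = f w"
    using tay_sums[OF f w] by (simp add: sums_iff)
  from L1 L2 have "integral\<^sup>L lborel (\<lambda>z. wt \<alpha> z *\<^sub>R F z) = (\<Sum>n. tay f n * w ^ n)"
    unfolding eq by (rule LIMSEQ_unique)
  then show ?thesis using fw by (simp add: F_def)
qed

lemma cs2: "a1 * b1 + a2 * b2 \<le> sqrt (a1\<^sup>2 + a2\<^sup>2) * sqrt (b1\<^sup>2 + b2\<^sup>2)" for a1 a2 b1 b2 :: real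
proof -
  have "(a1 * b1 + a2 * b2)\<^sup>2 \<le> (a1\<^sup>2 + a2\<^sup>2) * (b1\<^sup>2 + b2\<^sup>2)"
    using sum_squares_ge_zero[of "a1 * b2 - a2 * b1" 0] by (simp add: power2_eq_square algebra_simps)
  then have "\<bar>a1 * b1 + a2 * b2\<bar> \<le> sqrt ((a1\<^sup>2 + a2\<^sup>2) * (b1\<^sup>2 + b2\<^sup>2))"
    using real_le_rsqrt by (metis real_sqrt_abs real_sqrt_le_mono)
  then show ?thesis by (simp add: real_sqrt_mult)
qed

lemma cmod_sq: "complex_of_real ((cmod z)\<^sup>2) = z * cnj z"
  by (rule complex_norm_square)

lemma ellipse_sphere:
  fixes x y \<beta> \<gamma> :: complex
  assumes xy: "(cmod x)\<^sup>2 + (cmod y)\<^sup>2 = 1"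
  defines "v \<equiv> x * (\<beta> * cnj x + \<gamma> * cnj y)"
  shows "cmod v + cmod (v - \<beta>) \<le> sqrt ((cmod \<beta>)\<^sup>2 + (cmod \<gamma>)\<^sup>2)"
proof -
  define A where "A = \<beta> * cnj x + \<gamma> * cnj y"
  define B where "B = \<gamma> * x - \<beta> * y"
  have "x * cnj x + y * cnj y = complex_of_real ((cmod x)\<^sup>2) + complex_of_real ((cmod y)\<^sup>2)"
    by (simp only: cmod_sq)
  also have "\<dots> = 1" by (simp only: of_real_add[symmetric] xy of_real_1)
  finally have xy': "x * cnj x + y * cnj y = 1" .
  have vb: "v - \<beta> = cnj y * B"
  proof -
    have "v - \<beta> = x * (\<beta> * cnj x + \<gamma> * cnj y) - \<beta> * (x * cnj x + y * cnj y)"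
      by (simp add: v_def xy')
    then show ?thesis by (simp add: B_def algebra_simps)
  qed
  have AB: "(cmod A)\<^sup>2 + (cmod B)\<^sup>2 = ((cmod \<beta>)\<^sup>2 + (cmod \<gamma>)\<^sup>2) * ((cmod x)\<^sup>2 + (cmod y)\<^sup>2)"
  proof -
    have "complex_of_real ((cmod A)\<^sup>2 + (cmod B)\<^sup>2) = A * cnj A + B * cnj B"
      by (simp only: of_real_add cmod_sq)
    also have "\<dots> = (\<beta> * cnj \<beta> + \<gamma> * cnj \<gamma>) * (x * cnj x + y * cnj y)"
      by (simp add: A_def B_def algebra_simps)
    also have "\<dots> = complex_of_real (((cmod \<beta>)\<^sup>2 + (cmod \<gamma>)\<^sup>2) * ((cmod x)\<^sup>2 + (cmod y)\<^sup>2))"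
      by (simp only: of_real_mult of_real_add cmod_sq)
    finally show ?thesis using of_real_eq_iff by blast
  qed
  have c1: "cmod v = cmod x * cmod A" by (simp add: v_def A_def norm_mult)
  have c2: "cmod (v - \<beta>) = cmod y * cmod B" by (simp only: vb norm_mult complex_mod_cnj)
  have "cmod v + cmod (v - \<beta>) = cmod x * cmod A + cmod y * cmod B"
    by (simp only: c1 c2)
  also have "\<dots> \<le> sqrt ((cmod x)\<^sup>2 + (cmod y)\<^sup>2) * sqrt ((cmod A)\<^sup>2 + (cmod B)\<^sup>2)"
    by (rule cs2)
  also have "\<dots> = sqrt ((cmod \<beta>)\<^sup>2 + (cmod \<gamma>)\<^sup>2)"
    using xy AB by simp
  finally show ?thesis .
qed

lemma ellipse_ball:
  fixes x y \<beta> \<gamma> :: complex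
  assumes xy: "(cmod x)\<^sup>2 + (cmod y)\<^sup>2 \<le> 1"
  defines "v \<equiv> x * (\<beta> * cnj x + \<gamma> * cnj y)"
  shows "cmod v + cmod (v - \<beta>) \<le> sqrt ((cmod \<beta>)\<^sup>2 + (cmod \<gamma>)\<^sup>2)"
proof -
  define s where "s = sqrt ((cmod \<beta>)\<^sup>2 + (cmod \<gamma>)\<^sup>2)"
  have bs: "cmod \<beta> \<le> s" unfolding s_def by (rule real_le_rsqrt) simp
  define t2 where "t2 = (cmod x)\<^sup>2 + (cmod y)\<^sup>2"
  show ?thesis
  proof (cases "t2 = 0")
    case True
    then have "x = 0" "y = 0" unfolding t2_def by (auto simp: add_nonneg_eq_0_iff)
    then show ?thesis using bs by (simp add: v_def s_def)
  next
    case False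
    then have t2p: "t2 > 0" unfolding t2_def by (metis add_nonneg_nonneg le_less zero_le_power2)
    define t where "t = sqrt t2"
    have tp: "t > 0" using t2p by (simp add: t_def)
    have tt: "t * t = t2" using t2p by (simp add: t_def)
    define x' where "x' = x / of_real t"
    define y' where "y' = y / of_real t"
    have "(cmod x')\<^sup>2 + (cmod y')\<^sup>2 = t2 / (t * t)"
      using tp by (simp add: x'_def y'_def norm_divide power_divide t2_def power2_eq_square add_divide_distrib)
    then have sph: "(cmod x')\<^sup>2 + (cmod y')\<^sup>2 = 1" using tt t2p by simp
    define v' where "v' = x' * (\<beta> * cnj x' + \<gamma> * cnj y')"
    have v'le: "cmod v' + cmod (v' - \<beta>) \<le> s"
      unfolding v'_def s_def by (rule ellipse_sphere[OF sph])
    have vv: "v = of_real t2 * v'"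
    proof -
      have "x = of_real t * x'" "y = of_real t * y'" using tp by (simp_all add: x'_def y'_def)
      then have "v = of_real t * of_real t * v'" by (simp add: v_def v'_def algebra_simps)
      then show ?thesis by (simp flip: tt)
    qed
    have t21: "t2 \<le> 1" using xy by (simp add: t2_def)
    have "v - \<beta> = of_real t2 * (v' - \<beta>) - of_real (1 - t2) * \<beta>"
      by (simp add: vv algebra_simps)
    then have "cmod (v - \<beta>) \<le> t2 * cmod (v' - \<beta>) + (1 - t2) * cmod \<beta>"
      using t2p t21 by (metis (no_types, opaque_lifting) abs_of_nonneg diff_ge_0_iff_ge less_imp_le norm_mult norm_of_real norm_triangle_ineq4)
    moreover have "cmod v = t2 * cmod v'" using t2p by (simp add: vv norm_mult)
    ultimately have "cmod v + cmod (v - \<beta>) \<le> t2 * (cmod v' + cmod (v' - \<beta>)) + (1 - t2) * cmod \<beta>"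
      by (simp add: algebra_simps)
    also have "\<dots> \<le> t2 * s + (1 - t2) * s"
      using v'le bs t2p t21 by (intro add_mono mult_left_mono) auto
    finally show ?thesis by (simp add: s_def algebra_simps)
  qed
qed

lemma ellipse_h_identity:
  fixes a b c e g p s d1 d2 :: real
  assumes ps: "p * s = d1" and d1sq: "d1 * d1 = a * a + b * b"
    and d2sq: "d2 * d2 = (a - c) * (a - c) + (b - e) * (b - e)"
    and ssq: "s * s = c * c + e * e + g"
  shows "(a - p * c) * (a - p * c) + (b - p * e) * (b - p * e) - g * (p * (1 - p)) =
         p * (d2 * d2 - (s - d1) * (s - d1))"
proof -
  have e1: "p * p * (s * s) = a * a + b * b"
    using ps d1sq by (metis mult.assoc mult.left_commute)
  have e2: "p * s * d1 = a * a + b * b" using ps d1sq by simp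
  have "p * (d2 * d2 - (s - d1) * (s - d1)) = p * (d2 * d2) - p * (s * s) + 2 * (p * s * d1) - p * (d1 * d1)"
    by (simp add: algebra_simps)
  also have "\<dots> = p * ((a - c) * (a - c) + (b - e) * (b - e)) - p * (c * c + e * e + g) + 2 * (a * a + b * b) - p * (a * a + b * b)"
    by (simp only: d2sq ssq e2 d1sq)
  also have "\<dots> = - 2 * p * (a * c + b * e) - p * g + 2 * (a * a + b * b)"
    by (simp add: algebra_simps)
  finally have R: "p * (d2 * d2 - (s - d1) * (s - d1)) = - 2 * p * (a * c + b * e) - p * g + 2 * (a * a + b * b)" .
  have "(a - p * c) * (a - p * c) + (b - p * e) * (b - p * e) - g * (p * (1 - p)) =
      (a * a + b * b) - 2 * p * (a * c + b * e) + p * p * (c * c + e * e + g) - g * p"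
    by (simp add: algebra_simps)
  also have "\<dots> = (a * a + b * b) - 2 * p * (a * c + b * e) + p * p * (s * s) - g * p"
    by (simp only: ssq)
  also have "\<dots> = 2 * (a * a + b * b) - 2 * p * (a * c + b * e) - g * p"
    by (simp only: e1) simp
  finally show ?thesis using R by simp
qed

lemma ellipse_onto:
  fixes v \<beta> \<gamma> :: complex
  assumes le: "cmod v + cmod (v - \<beta>) \<le> sqrt ((cmod \<beta>)\<^sup>2 + (cmod \<gamma>)\<^sup>2)"
  shows "\<exists>x y. (cmod x)\<^sup>2 + (cmod y)\<^sup>2 = 1 \<and> v = x * (\<beta> * cnj x + \<gamma> * cnj y)"
proof -
  define s where "s = sqrt ((cmod \<beta>)\<^sup>2 + (cmod \<gamma>)\<^sup>2)"
  define d1 where "d1 = cmod v"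
  define d2 where "d2 = cmod (v - \<beta>)"
  have s0: "s \<ge> 0" by (simp add: s_def)
  show ?thesis
  proof (cases "s = 0")
    case True
    then have "\<beta> = 0" "\<gamma> = 0" unfolding s_def by (auto simp: add_nonneg_eq_0_iff)
    then have "v = 0" using le by simp
    show ?thesis
      by (rule exI[of _ 1], rule exI[of _ 0]) (simp add: \<open>v = 0\<close> \<open>\<beta> = 0\<close> \<open>\<gamma> = 0\<close>)
  next
    case False
    then have sp: "s > 0" using s0 by simp
    have d1s: "d1 \<le> s" and d2s: "d2 \<le> s - d1"
      using le norm_ge_zero[of "v - \<beta>"] unfolding d1_def d2_def s_def by linarith+
    define g where "g = (cmod \<gamma>)\<^sup>2"
    define h where "h p = (cmod (v - of_real p * \<beta>))\<^sup>2 - g * (p * (1 - p))" for p :: real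
    define p1 where "p1 = d1 / s"
    have p1: "0 \<le> p1" "p1 \<le> 1" using d1s sp by (auto simp: p1_def d1_def)
    have h0: "h 0 \<ge> 0" by (simp add: h_def)
    have hp1: "h p1 \<le> 0"
    proof -
      have ps: "p1 * s = d1" using sp by (simp add: p1_def)
      have d1sq: "d1 * d1 = Re v * Re v + Im v * Im v"
        by (simp add: d1_def cmod_def power2_eq_square[symmetric])
      have d2sq: "d2 * d2 = (Re v - Re \<beta>) * (Re v - Re \<beta>) + (Im v - Im \<beta>) * (Im v - Im \<beta>)"
        by (simp add: d2_def cmod_def power2_eq_square[symmetric])
      have ssq: "s * s = Re \<beta> * Re \<beta> + Im \<beta> * Im \<beta> + g"
        by (simp add: s_def g_def cmod_def power2_eq_square[symmetric])
      have "h p1 = (Re v - p1 * Re \<beta>) * (Re v - p1 * Re \<beta>) + (Im v - p1 * Im \<beta>) * (Im v - p1 * Im \<beta>) - g * (p1 * (1 - p1))"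
        unfolding h_def cmod_power2 by (simp add: power2_eq_square)
      also have "\<dots> = p1 * (d2 * d2 - (s - d1) * (s - d1))"
        by (rule ellipse_h_identity[OF ps d1sq d2sq ssq])
      also have "\<dots> \<le> 0"
      proof -
        have "d2 * d2 \<le> (s - d1) * (s - d1)"
          using d2s d1s by (intro mult_mono) (auto simp: d2_def)
        then show ?thesis using p1 by (simp add: mult_nonneg_nonpos)
      qed
      finally show ?thesis .
    qed
    have "continuous_on {0..p1} h" unfolding h_def by (intro continuous_intros)
    from IVT2'[of h p1 0 0, OF hp1 h0 p1(1) this]
    obtain q where q: "0 \<le> q" "q \<le> p1" "h q = 0" by blast
    have q1: "q \<le> 1" using q p1 by simp
    define t where "t = sqrt q * sqrt (1 - q)"
    have t0: "t \<ge> 0" using q q1 by (simp add: t_def)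
    have tt: "t * t = q * (1 - q)" using q q1 by (simp add: t_def real_sqrt_mult[symmetric])
    have "(cmod (v - of_real q * \<beta>))\<^sup>2 = (cmod \<gamma> * t)\<^sup>2"
      using q(3) tt by (simp add: h_def g_def power_mult_distrib power2_eq_square[of t])
    then have nq: "cmod (v - of_real q * \<beta>) = cmod \<gamma> * t"
      using t0 by (simp add: power2_eq_iff_nonneg)
    define x where "x = complex_of_real (sqrt q)"
    have xx: "x * cnj x = of_real q" using q by (simp add: x_def flip: of_real_mult)
    have x2: "(cmod x)\<^sup>2 = q" using q by (simp add: x_def)
    show ?thesis
    proof (cases "\<gamma> * of_real t = 0")
      case True
      then have vq: "v = of_real q * \<beta>" using nq t0 by (auto simp: mult_eq_0_iff)
      define y where "y = complex_of_real (sqrt (1 - q))"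
      have "x * (\<beta> * cnj x + \<gamma> * cnj y) = (x * cnj x) * \<beta> + \<gamma> * of_real t"
        by (simp add: x_def y_def t_def algebra_simps)
      also have "\<dots> = v" using True by (simp add: xx vq)
      finally have "v = x * (\<beta> * cnj x + \<gamma> * cnj y)" by simp
      moreover have "(cmod x)\<^sup>2 + (cmod y)\<^sup>2 = 1" using q1 by (simp add: x2 y_def)
      ultimately show ?thesis by blast
    next
      case False
      define \<zeta> where "\<zeta> = cnj ((v - of_real q * \<beta>) / (\<gamma> * of_real t))"
      have tp: "t > 0" using False t0 by auto
      have g0: "\<gamma> \<noteq> 0" using False by auto
      have z1: "cmod \<zeta> = 1"
        unfolding \<zeta>_def complex_mod_cnj using nq tp g0 by (simp add: norm_divide norm_mult)
      define y where "y = complex_of_real (sqrt (1 - q)) * \<zeta>"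
      have "x * (\<beta> * cnj x + \<gamma> * cnj y) = (x * cnj x) * \<beta> + of_real t * \<gamma> * cnj \<zeta>"
        by (simp add: x_def y_def t_def algebra_simps)
      also have "\<dots> = of_real q * \<beta> + (v - of_real q * \<beta>)"
        using tp g0 by (simp add: xx \<zeta>_def)
      also have "\<dots> = v" by simp
      finally have "v = x * (\<beta> * cnj x + \<gamma> * cnj y)" by simp
      moreover have "(cmod x)\<^sup>2 + (cmod y)\<^sup>2 = 1" using q1 z1 by (simp add: x2 y_def norm_mult)
      ultimately show ?thesis by blast
    qed
  qed
qed

locale ipspace =
  fixes H :: "'v set" and lc :: "complex \<Rightarrow> 'v \<Rightarrow> complex \<Rightarrow> 'v \<Rightarrow> 'v"
    and ip :: "'v \<Rightarrow> 'v \<Rightarrow> complex"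
  assumes lc_closed: "x \<in> H \<Longrightarrow> y \<in> H \<Longrightarrow> lc a x b y \<in> H"
    and ip_lin: "x \<in> H \<Longrightarrow> y \<in> H \<Longrightarrow> z \<in> H \<Longrightarrow> ip (lc a x b y) z = a * ip x z + b * ip y z"
    and ip_sym: "x \<in> H \<Longrightarrow> y \<in> H \<Longrightarrow> ip y x = cnj (ip x y)"
    and ip_pos: "x \<in> H \<Longrightarrow> Im (ip x x) = 0 \<and> Re (ip x x) \<ge> 0"
begin

definition nrm :: "'v \<Rightarrow> real" where "nrm x = sqrt (Re (ip x x))"

lemma ip_lin2:
  assumes "x \<in> H" "y \<in> H" "z \<in> H"
  shows "ip z (lc a x b y) = cnj a * ip z x + cnj b * ip z y"
proof -
  have "ip z (lc a x b y) = cnj (ip (lc a x b y) z)"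
    using assms by (intro ip_sym lc_closed)
  also have "\<dots> = cnj (a * ip x z + b * ip y z)" using assms by (simp add: ip_lin)
  also have "\<dots> = cnj a * cnj (ip x z) + cnj b * cnj (ip y z)" by simp
  also have "cnj (ip x z) = ip z x" using assms ip_sym[of z x] by simp
  also have "cnj (ip y z) = ip z y" using assms ip_sym[of z y] by simp
  finally show ?thesis .
qed

lemma ip_self: assumes "x \<in> H" shows "ip x x = of_real ((nrm x)\<^sup>2)"
proof -
  have i: "Im (ip x x) = 0" and r: "Re (ip x x) \<ge> 0" using ip_pos[OF assms] by auto
  have "(nrm x)\<^sup>2 = Re (ip x x)" using r by (simp add: nrm_def)
  then show ?thesis using i by (simp add: complex_eq_iff)
qed

lemma nrm_nonneg: "x \<in> H \<Longrightarrow> nrm x \<ge> 0" using ip_pos[of x] by (simp add: nrm_def)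

lemma ip_zero_left:
  assumes r: "r \<in> H" and f: "f \<in> H" and r0: "nrm r = 0"
  shows "ip r f = 0"
proof (rule ccontr)
  assume X0: "ip r f \<noteq> 0"
  define X where "X = ip r f"
  define \<epsilon> where "\<epsilon> = 1 / ((nrm f)\<^sup>2 + 1)"
  have "(nrm f)\<^sup>2 + 1 > 0" by (smt (verit) zero_le_power2)
  then have ep: "\<epsilon> > 0" by (simp add: \<epsilon>_def)
  define t where "t = - (of_real \<epsilon> * X)"
  define g where "g = lc 1 r t f"
  have gH: "g \<in> H" using r f by (simp add: g_def lc_closed)
  have rr: "ip r r = 0" using ip_self[OF r] r0 by simp
  have fr: "ip f r = cnj X" using ip_sym[OF r f] by (simp add: X_def)
  have XX: "X * cnj X = of_real ((cmod X)\<^sup>2)" by (simp only: cmod_sq)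
  have ct: "cnj t = - (of_real \<epsilon> * cnj X)" by (simp add: t_def)
  have "ip g g = 1 * ip r g + t * ip f g" using r f gH unfolding g_def by (rule ip_lin)
  also have "ip r g = cnj 1 * ip r r + cnj t * ip r f" using r f unfolding g_def by (intro ip_lin2)
  also have "ip f g = cnj 1 * ip f r + cnj t * ip f f" using r f unfolding g_def by (intro ip_lin2)
  finally have "ip g g = cnj t * X + t * (cnj X + cnj t * of_real ((nrm f)\<^sup>2))"
    using rr fr ip_self[OF f] by (simp add: X_def)
  also have "\<dots> = - of_real \<epsilon> * (X * cnj X) - of_real \<epsilon> * (X * cnj X) + of_real \<epsilon> * of_real \<epsilon> * (X * cnj X) * of_real ((nrm f)\<^sup>2)"
    unfolding ct t_def by (simp add: algebra_simps)
  also have "\<dots> = of_real (\<epsilon> * (cmod X)\<^sup>2 * (\<epsilon> * (nrm f)\<^sup>2 - 2))"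
    unfolding XX by (simp add: algebra_simps)
  finally have "Re (ip g g) = \<epsilon> * (cmod X)\<^sup>2 * (\<epsilon> * (nrm f)\<^sup>2 - 2)" by simp
  moreover have "\<epsilon> * (nrm f)\<^sup>2 < 1"
    using \<open>(nrm f)\<^sup>2 + 1 > 0\<close> by (simp add: \<epsilon>_def)
  moreover have "(cmod X)\<^sup>2 > 0" using X0 by (simp add: X_def)
  ultimately have "Re (ip g g) < 0"
    using ep by (simp add: mult_pos_neg)
  then show False using ip_pos[OF gH] by simp
qed

lemma bessel:
  assumes f: "f \<in> H" and e: "e \<in> H" and q: "q \<in> H"
    and ee: "ip e e = 1" and qq: "ip q q = 1" and eq: "ip e q = 0"
  shows "(cmod (ip f e))\<^sup>2 + (cmod (ip f q))\<^sup>2 \<le> (nrm f)\<^sup>2"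
proof -
  define x where "x = ip f e"
  define y where "y = ip f q"
  define P where "P = lc x e y q"
  define h where "h = lc 1 f (-1) P"
  have PH: "P \<in> H" using e q by (simp add: P_def lc_closed)
  have hH: "h \<in> H" using f PH by (simp add: h_def lc_closed)
  have qe: "ip q e = 0" using ip_sym[OF e q] eq by simp
  have ef: "ip e f = cnj x" using ip_sym[OF f e] by (simp add: x_def)
  have qf: "ip q f = cnj y" using ip_sym[OF f q] by (simp add: y_def)
  have eP: "ip e P = cnj x" using e q ip_lin2[OF e q e, of x y] by (simp add: P_def ee eq)
  have qP: "ip q P = cnj y" using e q ip_lin2[OF e q q, of x y] by (simp add: P_def qq qe)
  have PP: "ip P P = x * cnj x + y * cnj y"
    using ip_lin[OF e q PH, of x y, folded P_def] by (simp add: eP qP)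
  have fP: "ip f P = cnj x * x + cnj y * y"
    using ip_lin2[OF e q f, of x y, folded P_def] by (simp add: x_def y_def)
  have Pf: "ip P f = x * cnj x + y * cnj y"
    using ip_lin[OF e q f, of x y, folded P_def] by (simp add: ef qf)
  have fh: "ip f h = ip f f - ip f P"
    using ip_lin2[OF f PH f, of 1 "-1", folded h_def] by simp
  have Ph: "ip P h = ip P f - ip P P"
    using ip_lin2[OF f PH PH, of 1 "-1", folded h_def] by simp
  have "ip h h = ip f h - ip P h"
    using ip_lin[OF f PH hH, of 1 "-1", folded h_def] by simp
  also have "\<dots> = ip f f - (x * cnj x + y * cnj y)"
    by (simp add: fh Ph fP Pf PP mult.commute)
  also have "x * cnj x + y * cnj y = of_real ((cmod x)\<^sup>2 + (cmod y)\<^sup>2)"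
    by (simp only: of_real_add cmod_sq)
  finally have "Re (ip h h) = (nrm f)\<^sup>2 - ((cmod x)\<^sup>2 + (cmod y)\<^sup>2)"
    by (simp add: ip_self[OF f])
  then show ?thesis using ip_pos[OF hH] by (simp add: x_def y_def)
qed

theorem nr_ellipse:
  assumes k: "k \<in> H" and p: "p \<in> H" and kpos: "nrm k > 0"
    and q: "q \<in> H" and qq: "ip q q = 1" and qk: "ip q k = 0"
    and pdec: "\<And>f. f \<in> H \<Longrightarrow> ip p f = \<beta> * ip k f + \<gamma> * ip q f"
    and pn: "(nrm p)\<^sup>2 = (cmod \<beta>)\<^sup>2 * (nrm k)\<^sup>2 + (cmod \<gamma>)\<^sup>2"
  shows "{ip f k * ip p f | f. f \<in> H \<and> nrm f = 1} = {v. cmod v + cmod (v - ip p k) \<le> nrm p * nrm k}"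
proof -
  define K where "K = nrm k"
  have Kp: "K > 0" using kpos by (simp add: K_def)
  define e where "e = lc (of_real (1 / K)) k 0 k"
  have eH: "e \<in> H" using k by (simp add: e_def lc_closed)
  have kk: "ip k k = of_real (K\<^sup>2)" using ip_self[OF k] by (simp add: K_def)
  have ke: "ip k e = of_real K"
    using ip_lin2[OF k k k, of "of_real (1 / K)" 0, folded e_def] Kp by (simp add: kk power2_eq_square)
  have ee: "ip e e = 1"
    using ip_lin[OF k k eH, of "of_real (1 / K)" 0, folded e_def] Kp by (simp add: ke)
  have qe: "ip q e = 0"
    using ip_lin2[OF k k q, of "of_real (1 / K)" 0, folded e_def] by (simp add: qk)
  have eq: "ip e q = 0" using ip_sym[OF eH q] qe by simp
  have fk: "ip f k = of_real K * ip f e" if f: "f \<in> H" for f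
    using ip_lin2[OF k k f, of "of_real (1 / K)" 0, folded e_def] Kp by simp
  have kf: "ip k f = of_real K * cnj (ip f e)" if f: "f \<in> H" for f
    using ip_sym[OF f k] fk[OF f] by simp
  have qf: "ip q f = cnj (ip f q)" if f: "f \<in> H" for f
    using ip_sym[OF f q] by simp
  define B where "B = \<beta> * of_real K"
  define s where "s = sqrt ((cmod B)\<^sup>2 + (cmod \<gamma>)\<^sup>2)"
  have val: "ip f k * ip p f = of_real K * (ip f e * (B * cnj (ip f e) + \<gamma> * cnj (ip f q)))" if f: "f \<in> H" for f
    using pdec[OF f] fk[OF f] kf[OF f] qf[OF f] by (simp add: B_def algebra_simps)
  have pk: "ip p k = of_real K * B"
    using pdec[OF k] kk qk by (simp add: B_def power2_eq_square algebra_simps)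
  have ps: "nrm p * nrm k = K * s"
  proof -
    have "nrm p = sqrt ((nrm p)\<^sup>2)" using nrm_nonneg[OF p] by simp
    also have "\<dots> = s" unfolding pn s_def B_def using Kp
      by (simp add: norm_mult power_mult_distrib K_def)
    finally show ?thesis by (simp add: K_def)
  qed
  have scale: "cmod (of_real K * v0) + cmod (of_real K * v0 - of_real K * B) \<le> K * s \<longleftrightarrow>
      cmod v0 + cmod (v0 - B) \<le> s" for v0
  proof -
    have "cmod (of_real K * v0) + cmod (of_real K * v0 - of_real K * B) = K * (cmod v0 + cmod (v0 - B))"
      using Kp by (simp add: norm_mult right_diff_distrib[symmetric] distrib_left)
    then show ?thesis using Kp by simp
  qed
  show ?thesis
  proof (intro set_eqI iffI)
    fix v assume "v \<in> {ip f k * ip p f | f. f \<in> H \<and> nrm f = 1}"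
    then obtain f where f: "f \<in> H" "nrm f = 1" and v: "v = ip f k * ip p f" by blast
    have "(cmod (ip f e))\<^sup>2 + (cmod (ip f q))\<^sup>2 \<le> 1"
      using bessel[OF f(1) eH q ee qq eq] f(2) by simp
    from ellipse_ball[OF this, of B \<gamma>]
    have "cmod (ip f e * (B * cnj (ip f e) + \<gamma> * cnj (ip f q))) +
        cmod (ip f e * (B * cnj (ip f e) + \<gamma> * cnj (ip f q)) - B) \<le> s"
      by (simp add: s_def)
    then show "v \<in> {v. cmod v + cmod (v - ip p k) \<le> nrm p * nrm k}"
      using scale by (simp add: v val[OF f(1)] pk ps)
  next
    fix v assume "v \<in> {v. cmod v + cmod (v - ip p k) \<le> nrm p * nrm k}"
    then have v: "cmod v + cmod (v - of_real K * B) \<le> K * s" by (simp add: pk ps)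
    define v0 where "v0 = v / of_real K"
    have vv: "v = of_real K * v0" using Kp by (simp add: v0_def)
    have "cmod v0 + cmod (v0 - B) \<le> s" using v scale[of v0] by (simp add: vv)
    then obtain x y where xy: "(cmod x)\<^sup>2 + (cmod y)\<^sup>2 = 1" and v0: "v0 = x * (B * cnj x + \<gamma> * cnj y)"
      using ellipse_onto unfolding s_def by blast
    define f where "f = lc x e y q"
    have fH: "f \<in> H" using eH q by (simp add: f_def lc_closed)
    have fe: "ip f e = x" unfolding f_def using ip_lin[OF eH q eH, of x y] by (simp add: ee qe)
    have fq: "ip f q = y" unfolding f_def using ip_lin[OF eH q q, of x y] by (simp add: eq qq)
    have "ip f f = x * cnj x + y * cnj y"
      using ip_lin[OF eH q fH, of x y] ip_sym[OF fH eH] ip_sym[OF fH q]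
      by (simp add: f_def[symmetric] fe fq)
    also have "\<dots> = of_real ((cmod x)\<^sup>2 + (cmod y)\<^sup>2)" by (simp only: of_real_add cmod_sq)
    finally have ff: "ip f f = of_real ((cmod x)\<^sup>2 + (cmod y)\<^sup>2)" .
    then have "(nrm f)\<^sup>2 = 1" using ip_self[OF fH] xy by (metis of_real_eq_iff)
    then have nf: "nrm f = 1" using nrm_nonneg[OF fH] by (simp add: power2_eq_1_iff)
    have "v = ip f k * ip p f" using val[OF fH] by (simp add: fe fq vv v0)
    then show "v \<in> {ip f k * ip p f | f. f \<in> H \<and> nrm f = 1}" using fH nf by blast
  qed
qed

end

lemma dA_conv:
  fixes F :: "complex \<Rightarrow> 'b::{banach, second_countable_topology}"
  assumes a: "\<alpha> > -1" and F: "continuous_on (ball 0 1) F"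
  shows "integrable (dA_alpha \<alpha>) F \<longleftrightarrow> integrable lborel (\<lambda>z. wt \<alpha> z *\<^sub>R F z)"
    and "integral\<^sup>L (dA_alpha \<alpha>) F = integral\<^sup>L lborel (\<lambda>z. wt \<alpha> z *\<^sub>R F z)"
proof -
  define \<rho> where "\<rho> z = (\<alpha> + 1) / pi * (1 - (cmod z)\<^sup>2) powr \<alpha>" for z :: complex
  have dA: "dA_alpha \<alpha> = density (restrict_space lborel (ball 0 1)) (\<lambda>z. ennreal (\<rho> z))"
    by (simp add: dA_alpha_def \<rho>_def)
  have "F \<in> borel_measurable (restrict_space borel (ball 0 1))"
    by (rule borel_measurable_continuous_on_restrict[OF F])
  moreover have "sets (restrict_space lborel (ball (0::complex) 1)) = sets (restrict_space borel (ball 0 1))"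
    by (rule sets_restrict_space_cong) simp
  ultimately have Fm: "F \<in> borel_measurable (restrict_space lborel (ball 0 1))"
    using measurable_cong_sets by blast
  have \<rho>m: "\<rho> \<in> borel_measurable (restrict_space lborel (ball 0 1))"
    by (intro measurable_restrict_space1) (simp add: \<rho>_def[abs_def])
  have nn: "AE z in restrict_space lborel (ball 0 1). 0 \<le> \<rho> z"
    using a by (intro AE_I2) (simp add: \<rho>_def)
  have eqf: "(\<lambda>z. indicator (ball 0 1) z *\<^sub>R (\<rho> z *\<^sub>R F z)) = (\<lambda>z. wt \<alpha> z *\<^sub>R F z)"
    by (auto simp: fun_eq_iff wt_def \<rho>_def indicator_def dist_norm)
  have eqf2: "(\<lambda>z. (indicator (ball 0 1) z * \<rho> z) *\<^sub>R F z) = (\<lambda>z. wt \<alpha> z *\<^sub>R F z)"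
    by (auto simp: fun_eq_iff wt_def \<rho>_def indicator_def dist_norm)
  show "integrable (dA_alpha \<alpha>) F \<longleftrightarrow> integrable lborel (\<lambda>z. wt \<alpha> z *\<^sub>R F z)"
    unfolding dA integrable_density[OF Fm \<rho>m nn]
    by (subst integrable_restrict_space) (auto simp: eqf eqf2)
  show "integral\<^sup>L (dA_alpha \<alpha>) F = integral\<^sup>L lborel (\<lambda>z. wt \<alpha> z *\<^sub>R F z)"
    unfolding dA integral_density[OF Fm \<rho>m nn]
    by (subst integral_restrict_space) (auto simp: eqf eqf2)
qed

lemma sq_sum_le: "(u + v)\<^sup>2 \<le> 2 * u\<^sup>2 + 2 * v\<^sup>2" for u v :: real
proof -
  have "0 \<le> (u - v)\<^sup>2" by simp
  then show ?thesis by (simp add: power2_eq_square algebra_simps)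
qed

lemma prod_le_sq: "0 \<le> a \<Longrightarrow> 0 \<le> b \<Longrightarrow> a * b \<le> a\<^sup>2 + b\<^sup>2" for a b :: real
proof -
  assume "0 \<le> a" "0 \<le> b"
  have "0 \<le> (a - b)\<^sup>2" by simp
  then have "2 * (a * b) \<le> a\<^sup>2 + b\<^sup>2" by (simp add: power2_eq_square algebra_simps)
  moreover have "0 \<le> a * b" using \<open>0 \<le> a\<close> \<open>0 \<le> b\<close> by simp
  ultimately show ?thesis by linarith
qed

lemma holo_cont: "f holomorphic_on ball 0 1 \<Longrightarrow> continuous_on (ball 0 1) f"
  using holomorphic_on_imp_continuous_on by blast

lemma bergman_D:
  assumes a: "\<alpha> > -1" and f: "f \<in> bergman \<alpha>"
  shows "f holomorphic_on ball 0 1" "continuous_on (ball 0 1) f"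
    and "integrable lborel (\<lambda>z. wt \<alpha> z * (cmod (f z))\<^sup>2)"
proof -
  show fh: "f holomorphic_on ball 0 1" using f by (simp add: bergman_def)
  show fc: "continuous_on (ball 0 1) f" using holo_cont[OF fh] .
  have "continuous_on (ball 0 1) (\<lambda>z. (cmod (f z))\<^sup>2)" by (intro continuous_intros fc)
  from dA_conv(1)[OF a this] f show "integrable lborel (\<lambda>z. wt \<alpha> z * (cmod (f z))\<^sup>2)"
    by (simp add: bergman_def)
qed

lemma bergman_I:
  assumes a: "\<alpha> > -1" and fh: "f holomorphic_on ball 0 1"
    and int: "integrable lborel (\<lambda>z. wt \<alpha> z * (cmod (f z))\<^sup>2)"
  shows "f \<in> bergman \<alpha>"
proof -
  have "continuous_on (ball 0 1) (\<lambda>z. (cmod (f z))\<^sup>2)" by (intro continuous_intros holo_cont fh)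
  from dA_conv(1)[OF a this] int fh show ?thesis by (simp add: bergman_def)
qed

lemma bergman_norm_conv:
  assumes a: "\<alpha> > -1" and fc: "continuous_on (ball 0 1) f"
  shows "bergman_norm \<alpha> f = sqrt (integral\<^sup>L lborel (\<lambda>z. wt \<alpha> z * (cmod (f z))\<^sup>2))"
proof -
  have "continuous_on (ball 0 1) (\<lambda>z. (cmod (f z))\<^sup>2)" by (intro continuous_intros fc)
  from dA_conv(2)[OF a this] show ?thesis by (simp add: bergman_norm_def)
qed

lemma bergman_inner_conv:
  assumes a: "\<alpha> > -1" and fc: "continuous_on (ball 0 1) f" and gc: "continuous_on (ball 0 1) g"
  shows "bergman_inner \<alpha> f g = integral\<^sup>L lborel (\<lambda>z. wt \<alpha> z *\<^sub>R (f z * cnj (g z)))"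
proof -
  have "continuous_on (ball 0 1) (\<lambda>z. f z * cnj (g z))" by (intro continuous_intros fc gc)
  from dA_conv(2)[OF a this] show ?thesis by (simp add: bergman_inner_def)
qed

lemma prod_int:
  assumes a: "\<alpha> > -1" and f: "f \<in> bergman \<alpha>" and g: "g \<in> bergman \<alpha>"
  shows "integrable lborel (\<lambda>z. wt \<alpha> z *\<^sub>R (f z * cnj (g z)))"
proof (rule Bochner_Integration.integrable_bound)
  show "integrable lborel (\<lambda>z. wt \<alpha> z * (cmod (f z))\<^sup>2 + wt \<alpha> z * (cmod (g z))\<^sup>2)"
    using bergman_D(3)[OF a f] bergman_D(3)[OF a g] by (rule Bochner_Integration.integrable_add)
  have cc: "continuous_on (ball 0 1) (\<lambda>z. f z * cnj (g z))"
    by (intro continuous_intros bergman_D(2)[OF a f] bergman_D(2)[OF a g])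
  show "(\<lambda>z. wt \<alpha> z *\<^sub>R (f z * cnj (g z))) \<in> borel_measurable lborel"
    using meas_cont_D[OF cc wt_meas wt_out] by simp
  show "AE z in lborel. norm (wt \<alpha> z *\<^sub>R (f z * cnj (g z))) \<le> norm (wt \<alpha> z * (cmod (f z))\<^sup>2 + wt \<alpha> z * (cmod (g z))\<^sup>2)"
  proof (intro AE_I2)
    fix z
    have w0: "wt \<alpha> z \<ge> 0" using wt_nonneg[OF a] .
    have "cmod (f z) * cmod (g z) \<le> (cmod (f z))\<^sup>2 + (cmod (g z))\<^sup>2"
      by (intro prod_le_sq) auto
    then have "wt \<alpha> z * (cmod (f z) * cmod (g z)) \<le> wt \<alpha> z * ((cmod (f z))\<^sup>2 + (cmod (g z))\<^sup>2)"
      using w0 by (rule mult_left_mono)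
    then show "norm (wt \<alpha> z *\<^sub>R (f z * cnj (g z))) \<le> norm (wt \<alpha> z * (cmod (f z))\<^sup>2 + wt \<alpha> z * (cmod (g z))\<^sup>2)"
      using w0 by (simp add: norm_mult distrib_left)
  qed
qed

lemma bergman_lc:
  assumes a: "\<alpha> > -1" and f: "f \<in> bergman \<alpha>" and g: "g \<in> bergman \<alpha>"
  shows "(\<lambda>z. c * f z + d * g z) \<in> bergman \<alpha>"
proof (rule bergman_I[OF a])
  show "(\<lambda>z. c * f z + d * g z) holomorphic_on ball 0 1"
    by (intro holomorphic_intros bergman_D(1)[OF a f] bergman_D(1)[OF a g])
  show "integrable lborel (\<lambda>z. wt \<alpha> z * (cmod (c * f z + d * g z))\<^sup>2)"
  proof (rule Bochner_Integration.integrable_bound)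
    show "integrable lborel (\<lambda>z. (2 * (cmod c)\<^sup>2) * (wt \<alpha> z * (cmod (f z))\<^sup>2) + (2 * (cmod d)\<^sup>2) * (wt \<alpha> z * (cmod (g z))\<^sup>2))"
      using bergman_D(3)[OF a f] bergman_D(3)[OF a g] by (intro Bochner_Integration.integrable_add Bochner_Integration.integrable_mult_right)
    have cc: "continuous_on (ball 0 1) (\<lambda>z. (cmod (c * f z + d * g z))\<^sup>2)"
      by (intro continuous_intros bergman_D(2)[OF a f] bergman_D(2)[OF a g])
    show "(\<lambda>z. wt \<alpha> z * (cmod (c * f z + d * g z))\<^sup>2) \<in> borel_measurable lborel"
      using meas_cont_D[OF cc wt_meas wt_out] by simp
    show "AE z in lborel. norm (wt \<alpha> z * (cmod (c * f z + d * g z))\<^sup>2) \<le>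
        norm ((2 * (cmod c)\<^sup>2) * (wt \<alpha> z * (cmod (f z))\<^sup>2) + (2 * (cmod d)\<^sup>2) * (wt \<alpha> z * (cmod (g z))\<^sup>2))"
    proof (intro AE_I2)
      fix z
      have w0: "wt \<alpha> z \<ge> 0" using wt_nonneg[OF a] .
      have t: "cmod (c * f z + d * g z) \<le> cmod c * cmod (f z) + cmod d * cmod (g z)"
        using norm_triangle_ineq[of "c * f z" "d * g z"] by (simp add: norm_mult)
      have "(cmod (c * f z + d * g z))\<^sup>2 \<le> (cmod c * cmod (f z) + cmod d * cmod (g z))\<^sup>2"
        using t by (intro power_mono) auto
      also have "\<dots> \<le> 2 * (cmod c)\<^sup>2 * (cmod (f z))\<^sup>2 + 2 * (cmod d)\<^sup>2 * (cmod (g z))\<^sup>2"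
        using sq_sum_le[of "cmod c * cmod (f z)" "cmod d * cmod (g z)"] by (simp add: power_mult_distrib)
      finally have "wt \<alpha> z * (cmod (c * f z + d * g z))\<^sup>2 \<le> wt \<alpha> z * (2 * (cmod c)\<^sup>2 * (cmod (f z))\<^sup>2 + 2 * (cmod d)\<^sup>2 * (cmod (g z))\<^sup>2)"
        using w0 by (rule mult_left_mono)
      then show "norm (wt \<alpha> z * (cmod (c * f z + d * g z))\<^sup>2) \<le>
        norm ((2 * (cmod c)\<^sup>2) * (wt \<alpha> z * (cmod (f z))\<^sup>2) + (2 * (cmod d)\<^sup>2) * (wt \<alpha> z * (cmod (g z))\<^sup>2))"
        using w0 by (simp add: algebra_simps)
    qed
  qed
qed

abbreviation lcf :: "complex \<Rightarrow> (complex \<Rightarrow> complex) \<Rightarrow> complex \<Rightarrow> (complex \<Rightarrow> complex) \<Rightarrow> complex \<Rightarrow> complex" where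
  "lcf c f d g \<equiv> (\<lambda>z. c * f z + d * g z)"

lemma cmod_sq': "(complex_of_real (cmod z))\<^sup>2 = z * cnj z"
  by (simp only: of_real_power[symmetric] cmod_sq)

lemma ipspace_bergman:
  assumes a: "\<alpha> > -1"
  shows "ipspace (bergman \<alpha>) lcf (bergman_inner \<alpha>)"
proof
  fix x y :: "complex \<Rightarrow> complex" and c d :: complex
  assume x: "x \<in> bergman \<alpha>" and y: "y \<in> bergman \<alpha>"
  show "lcf c x d y \<in> bergman \<alpha>" by (rule bergman_lc[OF a x y])
next
  fix x y z :: "complex \<Rightarrow> complex" and c d :: complex
  assume x: "x \<in> bergman \<alpha>" and y: "y \<in> bergman \<alpha>" and z: "z \<in> bergman \<alpha>"
  have xc: "continuous_on (ball 0 1) x" and yc: "continuous_on (ball 0 1) y" and zc: "continuous_on (ball 0 1) z"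
    using bergman_D(2)[OF a] x y z by auto
  have lc: "continuous_on (ball 0 1) (lcf c x d y)" by (intro continuous_intros xc yc)
  have "bergman_inner \<alpha> (lcf c x d y) z = integral\<^sup>L lborel (\<lambda>t. wt \<alpha> t *\<^sub>R ((c * x t + d * y t) * cnj (z t)))"
    by (rule bergman_inner_conv[OF a lc zc])
  also have "\<dots> = integral\<^sup>L lborel (\<lambda>t. c * (wt \<alpha> t *\<^sub>R (x t * cnj (z t))) + d * (wt \<alpha> t *\<^sub>R (y t * cnj (z t))))"
    by (intro Bochner_Integration.integral_cong) (auto simp: scaleR_conv_of_real algebra_simps)
  also have "\<dots> = c * integral\<^sup>L lborel (\<lambda>t. wt \<alpha> t *\<^sub>R (x t * cnj (z t))) + d * integral\<^sup>L lborel (\<lambda>t. wt \<alpha> t *\<^sub>R (y t * cnj (z t)))"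
    by (simp only: Bochner_Integration.integral_add[OF Bochner_Integration.integrable_mult_right[OF prod_int[OF a x z]]
          Bochner_Integration.integrable_mult_right[OF prod_int[OF a y z]]] integral_mult_right_zero)
  also have "\<dots> = c * bergman_inner \<alpha> x z + d * bergman_inner \<alpha> y z"
    by (simp add: bergman_inner_conv[OF a xc zc] bergman_inner_conv[OF a yc zc])
  finally show "bergman_inner \<alpha> (lcf c x d y) z = c * bergman_inner \<alpha> x z + d * bergman_inner \<alpha> y z" .
next
  fix x y :: "complex \<Rightarrow> complex"
  assume x: "x \<in> bergman \<alpha>" and y: "y \<in> bergman \<alpha>"
  have xc: "continuous_on (ball 0 1) x" and yc: "continuous_on (ball 0 1) y"
    using bergman_D(2)[OF a] x y by auto
  have "cnj (bergman_inner \<alpha> x y) = integral\<^sup>L lborel (\<lambda>t. cnj (wt \<alpha> t *\<^sub>R (x t * cnj (y t))))"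
    unfolding bergman_inner_conv[OF a xc yc] by (rule Bochner_Integration.integral_cnj[symmetric])
  also have "\<dots> = integral\<^sup>L lborel (\<lambda>t. wt \<alpha> t *\<^sub>R (y t * cnj (x t)))"
    by (intro Bochner_Integration.integral_cong) (auto simp: scaleR_conv_of_real)
  also have "\<dots> = bergman_inner \<alpha> y x" by (simp add: bergman_inner_conv[OF a yc xc])
  finally show "bergman_inner \<alpha> y x = cnj (bergman_inner \<alpha> x y)" by simp
next
  fix x :: "complex \<Rightarrow> complex"
  assume x: "x \<in> bergman \<alpha>"
  have xc: "continuous_on (ball 0 1) x" using bergman_D(2)[OF a] x by auto
  have "bergman_inner \<alpha> x x = integral\<^sup>L lborel (\<lambda>t. complex_of_real (wt \<alpha> t * (cmod (x t))\<^sup>2))"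
    unfolding bergman_inner_conv[OF a xc xc]
    by (intro Bochner_Integration.integral_cong) (auto simp: scaleR_conv_of_real cmod_sq')
  also have "\<dots> = of_real (integral\<^sup>L lborel (\<lambda>t. wt \<alpha> t * (cmod (x t))\<^sup>2))" by (rule integral_complex_of_real)
  finally have e: "bergman_inner \<alpha> x x = of_real (integral\<^sup>L lborel (\<lambda>t. wt \<alpha> t * (cmod (x t))\<^sup>2))" .
  have "integral\<^sup>L lborel (\<lambda>t. wt \<alpha> t * (cmod (x t))\<^sup>2) \<ge> 0"
    using wt_nonneg[OF a] by (intro integral_nonneg_AE) auto
  then show "Im (bergman_inner \<alpha> x x) = 0 \<and> Re (bergman_inner \<alpha> x x) \<ge> 0" by (simp add: e)
qed

lemma nrm_bergman:
  assumes a: "\<alpha> > -1" and x: "x \<in> bergman \<alpha>"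
  shows "ipspace.nrm (bergman_inner \<alpha>) x = bergman_norm \<alpha> x"
proof -
  interpret B: ipspace "bergman \<alpha>" lcf "bergman_inner \<alpha>" by (rule ipspace_bergman[OF a])
  have xc: "continuous_on (ball 0 1) x" using bergman_D(2)[OF a] x by auto
  have "bergman_inner \<alpha> x x = integral\<^sup>L lborel (\<lambda>t. complex_of_real (wt \<alpha> t * (cmod (x t))\<^sup>2))"
    unfolding bergman_inner_conv[OF a xc xc]
    by (intro Bochner_Integration.integral_cong) (auto simp: scaleR_conv_of_real cmod_sq')
  also have "\<dots> = of_real (integral\<^sup>L lborel (\<lambda>t. wt \<alpha> t * (cmod (x t))\<^sup>2))" by (rule integral_complex_of_real)
  finally show ?thesis by (simp add: B.nrm_def bergman_norm_conv[OF a xc])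
qed

lemma inner_cong1:
  assumes "\<And>z. z \<in> ball 0 1 \<Longrightarrow> f z = f' z"
  shows "bergman_inner \<alpha> f g = bergman_inner \<alpha> f' g"
  unfolding bergman_inner_def
  by (intro Bochner_Integration.integral_cong) (auto simp: dA_alpha_def assms)

lemma inner_cong2:
  assumes "\<And>z. z \<in> ball 0 1 \<Longrightarrow> g z = g' z"
  shows "bergman_inner \<alpha> f g = bergman_inner \<alpha> f g'"
  unfolding bergman_inner_def
  by (intro Bochner_Integration.integral_cong) (auto simp: dA_alpha_def assms)

lemma kern_bound:
  assumes a: "\<alpha> > -1" and w: "cmod w < 1" and z: "cmod z < 1"
  shows "cmod (bergman_kernel \<alpha> w z) \<le> (1 - cmod w) powr (- (\<alpha> + 2))"
proof -
  have "cmod (bergman_kernel \<alpha> w z) = cmod (1 - cnj w * z) powr (- (\<alpha> + 2))"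
    unfolding bergman_kernel_def by (subst norm_powr_real_powr') auto
  also have "\<dots> \<le> (1 - cmod w) powr (- (\<alpha> + 2))"
  proof (rule powr_mono2')
    show "- (\<alpha> + 2) \<le> 0" using a by simp
    show "0 < 1 - cmod w" using w by simp
    have "cmod (cnj w * z) \<le> cmod w"
      using z by (simp add: norm_mult mult_left_le)
    then show "1 - cmod w \<le> cmod (1 - cnj w * z)"
      using norm_triangle_ineq2[of 1 "cnj w * z"] by simp
  qed
  finally show ?thesis .
qed

lemma kern_in:
  assumes a: "\<alpha> > -1" and w: "w \<in> ball 0 1"
  shows "bergman_kernel \<alpha> w \<in> bergman \<alpha>"
proof (rule bergman_I[OF a])
  have cw: "cmod w < 1" using w by simp
  show "bergman_kernel \<alpha> w holomorphic_on ball 0 1" by (rule kern_holo[OF cw])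
  define C where "C = ((1 - cmod w) powr (- (\<alpha> + 2)))\<^sup>2"
  have cc: "continuous_on (ball 0 1) (\<lambda>z. (cmod (bergman_kernel \<alpha> w z))\<^sup>2)"
    by (intro continuous_intros kern_cont[OF cw])
  show "integrable lborel (\<lambda>z. wt \<alpha> z * (cmod (bergman_kernel \<alpha> w z))\<^sup>2)"
  proof (rule integrable_wt_bound[OF a, where C = C])
    show "(\<lambda>z. wt \<alpha> z * (cmod (bergman_kernel \<alpha> w z))\<^sup>2) \<in> borel_measurable borel"
      using meas_cont_D[OF cc wt_meas wt_out] by simp
    show "norm (wt \<alpha> z * (cmod (bergman_kernel \<alpha> w z))\<^sup>2) \<le> C * wt \<alpha> z" for z
    proof (cases "cmod z < 1")
      case True
      have "(cmod (bergman_kernel \<alpha> w z))\<^sup>2 \<le> C"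
        unfolding C_def using kern_bound[OF a cw True] by (intro power_mono) auto
      note h = this
      have w0: "wt \<alpha> z \<ge> 0" by (rule wt_nonneg[OF a])
      have "norm (wt \<alpha> z * (cmod (bergman_kernel \<alpha> w z))\<^sup>2) = wt \<alpha> z * (cmod (bergman_kernel \<alpha> w z))\<^sup>2"
        using w0 by simp
      also have "\<dots> \<le> wt \<alpha> z * C" by (rule mult_left_mono[OF h w0])
      finally show ?thesis by (simp add: mult.commute)
    next
      case False
      then show ?thesis by (simp add: wt_def)
    qed
  qed
qed

lemma reproducing:
  assumes a: "\<alpha> > -1" and w: "w \<in> ball 0 1" and f: "f \<in> bergman \<alpha>"
  shows "bergman_inner \<alpha> f (bergman_kernel \<alpha> w) = f w"
proof -
  have cw: "cmod w < 1" using w by simp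
  have "bergman_inner \<alpha> f (bergman_kernel \<alpha> w) =
      integral\<^sup>L lborel (\<lambda>z. wt \<alpha> z *\<^sub>R (f z * cnj (bergman_kernel \<alpha> w z)))"
    by (rule bergman_inner_conv[OF a bergman_D(2)[OF a f] kern_cont[OF cw]])
  also have "\<dots> = f w"
    by (rule reproducing_lborel[OF a bergman_D(1)[OF a f] w prod_int[OF a f kern_in[OF a w]]])
  finally show ?thesis .
qed

lemma kern_at_w:
  assumes a: "\<alpha> > -1" and w: "w \<in> ball 0 1"
  shows "bergman_kernel \<alpha> w w = of_real ((1 - (cmod w)\<^sup>2) powr (- (\<alpha> + 2)))"
proof -
  have "complex_of_real (1 - (cmod w)\<^sup>2) = 1 - w * cnj w"
    by (simp only: of_real_diff of_real_1 cmod_sq)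
  then have "1 - cnj w * w = complex_of_real (1 - (cmod w)\<^sup>2)" by (simp add: mult.commute)
  moreover have "- (complex_of_real \<alpha> + 2) = complex_of_real (- (\<alpha> + 2))" by simp
  moreover have "0 \<le> 1 - (cmod w)\<^sup>2" using w by (simp add: abs_square_le_1 less_imp_le)
  ultimately show ?thesis unfolding bergman_kernel_def by (simp only: powr_of_real)
qed

lemma kern_norm:
  assumes a: "\<alpha> > -1" and w: "w \<in> ball 0 1"
  shows "bergman_norm \<alpha> (bergman_kernel \<alpha> w) = (1 - (cmod w)\<^sup>2) powr (- (\<alpha> / 2 + 1))"
proof -
  interpret B: ipspace "bergman \<alpha>" lcf "bergman_inner \<alpha>" by (rule ipspace_bergman[OF a])
  have KH: "bergman_kernel \<alpha> w \<in> bergman \<alpha>" by (rule kern_in[OF a w])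
  have x0: "0 < 1 - (cmod w)\<^sup>2" using w by (simp add: abs_square_less_1)
  have "bergman_norm \<alpha> (bergman_kernel \<alpha> w) = sqrt (Re (bergman_inner \<alpha> (bergman_kernel \<alpha> w) (bergman_kernel \<alpha> w)))"
    using nrm_bergman[OF a KH] by (simp add: B.nrm_def)
  also have "\<dots> = sqrt ((1 - (cmod w)\<^sup>2) powr (- (\<alpha> + 2)))"
    by (simp add: reproducing[OF a w KH] kern_at_w[OF a w])
  also have "\<dots> = ((1 - (cmod w)\<^sup>2) powr (- (\<alpha> + 2))) powr (1/2)"
    using x0 by (simp add: powr_half_sqrt)
  also have "\<dots> = (1 - (cmod w)\<^sup>2) powr (- (\<alpha> + 2) * (1/2))"
    by (simp only: powr_powr)
  also have "\<dots> = (1 - (cmod w)\<^sup>2) powr (- (\<alpha> / 2 + 1))"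
    by (rule arg_cong[where f = "\<lambda>e. (1 - (cmod w)\<^sup>2) powr e"]) simp
  finally show ?thesis .
qed

lemma wt_pos:
  assumes "\<alpha> > -1" "cmod z < 1" shows "wt \<alpha> z > 0"
proof -
  have "1 - (cmod z)\<^sup>2 > 0" using assms by (simp add: abs_square_less_1)
  then have "(1 - (cmod z)\<^sup>2) powr \<alpha> > 0" by simp
  then show ?thesis using assms by (simp add: wt_def)
qed

lemma zero_on_D:
  assumes a: "\<alpha> > -1" and fc: "continuous_on (ball 0 1) f"
    and int: "integrable lborel (\<lambda>z. wt \<alpha> z * (cmod (f z))\<^sup>2)"
    and z0: "integral\<^sup>L lborel (\<lambda>z. wt \<alpha> z * (cmod (f z))\<^sup>2) = 0" and z: "z \<in> ball 0 1"
  shows "f z = 0"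
proof (rule ccontr)
  assume fz: "f z \<noteq> 0"
  have "AE x in lborel. wt \<alpha> x * (cmod (f x))\<^sup>2 = 0"
    using integral_nonneg_eq_0_iff_AE[OF int] z0 wt_nonneg[OF a] by simp
  then obtain N where N: "{x \<in> space lborel. \<not> wt \<alpha> x * (cmod (f x))\<^sup>2 = 0} \<subseteq> N" "emeasure lborel N = 0" "N \<in> sets lborel"
    by (rule AE_E)
  obtain e where e: "e > 0" "\<forall>y\<in>ball 0 1. dist z y < e \<longrightarrow> f y \<noteq> 0"
    using continuous_on_avoid[OF fc z fz] by blast
  define d where "d = min e (1 - cmod z)"
  have d: "d > 0" using e z by (simp add: d_def)
  have "ball z d \<subseteq> N"
  proof
    fix y assume y: "y \<in> ball z d"
    then have y1: "cmod y < 1"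
      using norm_triangle_ineq2[of y z] by (simp add: d_def dist_norm norm_minus_commute)
    then have "f y \<noteq> 0" using e y by (auto simp: d_def dist_norm)
    moreover have "wt \<alpha> y > 0" using wt_pos[OF a y1] .
    ultimately show "y \<in> N" using N(1) by auto
  qed
  then have "emeasure lborel (ball z d) \<le> emeasure lborel N"
    using N(3) by (intro emeasure_mono) auto
  moreover have "emeasure lborel (ball z d) = ennreal (pi * d\<^sup>2)"
  proof -
    have "emeasure lborel (ball z d) = ennreal (unit_ball_vol (real DIM(complex)) * d ^ DIM(complex))"
      using d by (intro emeasure_ball) simp
    then show ?thesis by (simp add: unit_ball_vol_2)
  qed
  ultimately show False using N(2) d by simp
qed

context ipspace
begin

lemma normalize:
  assumes r: "r \<in> H" and rp: "nrm r > 0"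
  defines "q \<equiv> lc (of_real (1 / nrm r)) r 0 r"
  shows "q \<in> H" "ip q q = 1" "\<And>f. f \<in> H \<Longrightarrow> ip r f = of_real (nrm r) * ip q f"
proof -
  show qH: "q \<in> H" using r by (simp add: q_def lc_closed)
  have qf: "ip q f = of_real (1 / nrm r) * ip r f" if f: "f \<in> H" for f
    using ip_lin[OF r r f, of "of_real (1 / nrm r)" 0] by (simp add: q_def)
  show "ip r f = of_real (nrm r) * ip q f" if f: "f \<in> H" for f
    using qf[OF f] rp by simp
  have rq: "ip r q = of_real (1 / nrm r) * ip r r"
    using ip_lin2[OF r r r, of "of_real (1 / nrm r)" 0] by (simp add: q_def)
  show "ip q q = 1"
    using qf[OF qH] rq ip_self[OF r] rp by (simp add: power2_eq_square)
qed

end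

lemma const1_in: "\<alpha> > -1 \<Longrightarrow> (\<lambda>_. 1) \<in> bergman \<alpha>"
  by (rule bergman_I) (auto simp: wt_integrable)

lemma id_in: "\<alpha> > -1 \<Longrightarrow> (\<lambda>z. z) \<in> bergman \<alpha>"
  by (rule bergman_I) (use mom_integrable(1)[of \<alpha> 1] in auto)

lemma kern_0: "bergman_kernel \<alpha> w 0 = 1"
  by (simp add: bergman_kernel_def powr_def)

lemma segment_char: "{v. cmod v + cmod (v - a) \<le> cmod a} = closed_segment 0 a"
proof (intro set_eqI iffI)
  fix v assume "v \<in> {v. cmod v + cmod (v - a) \<le> cmod a}"
  then have le: "cmod v + cmod (v - a) \<le> cmod a" by simp
  have "cmod a \<le> cmod v + cmod (v - a)" using norm_triangle_ineq4[of v "v - a"] by simp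
  then have "dist 0 a = dist 0 v + dist v a" using le by (simp add: dist_norm norm_minus_commute)
  then show "v \<in> closed_segment 0 a" by (simp add: between_mem_segment[symmetric] between)
next
  fix v assume "v \<in> closed_segment 0 a"
  then have "dist 0 a = dist 0 v + dist v a" by (simp add: between_mem_segment[symmetric] between)
  then show "v \<in> {v. cmod v + cmod (v - a) \<le> cmod a}" by (simp add: dist_norm norm_minus_commute)
qed

lemma zero_norm_D:
  assumes a: "\<alpha> > -1" and r: "r \<in> bergman \<alpha>" and n: "bergman_norm \<alpha> r = 0" and z: "z \<in> ball 0 1"
  shows "r z = 0"
proof -
  have rc: "continuous_on (ball 0 1) r" by (rule bergman_D(2)[OF a r])
  have int: "integrable lborel (\<lambda>z. wt \<alpha> z * (cmod (r z))\<^sup>2)" by (rule bergman_D(3)[OF a r])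
  have nn: "integral\<^sup>L lborel (\<lambda>z. wt \<alpha> z * (cmod (r z))\<^sup>2) \<ge> 0"
    using wt_nonneg[OF a] by (intro integral_nonneg_AE) auto
  have "integral\<^sup>L lborel (\<lambda>z. wt \<alpha> z * (cmod (r z))\<^sup>2) = 0"
    using n nn unfolding bergman_norm_conv[OF a rc] by simp
  from zero_on_D[OF a rc int this z] show ?thesis .
qed

lemma orth_unit_exists:
  assumes a: "\<alpha> > -1" and KH: "K \<in> bergman \<alpha>" and K0: "K 0 = 1"
    and Kpos: "ipspace.nrm (bergman_inner \<alpha>) K > 0"
  shows "\<exists>q \<in> bergman \<alpha>. bergman_inner \<alpha> q q = 1 \<and> bergman_inner \<alpha> q K = 0"
proof -
  interpret B: ipspace "bergman \<alpha>" lcf "bergman_inner \<alpha>" by (rule ipspace_bergman[OF a])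
  have iH: "(\<lambda>z. z) \<in> bergman \<alpha>" by (rule id_in[OF a])
  define c where "c = bergman_inner \<alpha> (\<lambda>z. z) K / bergman_inner \<alpha> K K"
  define r where "r = lcf 1 (\<lambda>z. z) (- c) K"
  have rH: "r \<in> bergman \<alpha>" unfolding r_def by (rule B.lc_closed[OF iH KH])
  have KK: "bergman_inner \<alpha> K K \<noteq> 0" using B.ip_self[OF KH] Kpos by simp
  have rK: "bergman_inner \<alpha> r K = 0"
    unfolding r_def using B.ip_lin[OF iH KH KH, of 1 "- c"] KK by (simp add: c_def)
  have rp: "B.nrm r > 0"
  proof (rule ccontr)
    assume "\<not> B.nrm r > 0"
    then have "B.nrm r = 0" using B.nrm_nonneg[OF rH] by simp
    then have n0: "bergman_norm \<alpha> r = 0" using nrm_bergman[OF a rH] by simp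
    have "r 0 = 0" by (rule zero_norm_D[OF a rH n0]) simp
    then have c0: "c = 0" by (simp add: r_def K0)
    have "r (1/2) = 0" by (rule zero_norm_D[OF a rH n0]) simp
    then show False by (simp add: r_def c0)
  qed
  show ?thesis
  proof (intro bexI conjI)
    show "lcf (of_real (1 / B.nrm r)) r 0 r \<in> bergman \<alpha>" by (rule B.normalize(1)[OF rH rp])
    show "bergman_inner \<alpha> (lcf (of_real (1 / B.nrm r)) r 0 r) (lcf (of_real (1 / B.nrm r)) r 0 r) = 1"
      by (rule B.normalize(2)[OF rH rp])
    have "bergman_inner \<alpha> r K = of_real (B.nrm r) * bergman_inner \<alpha> (lcf (of_real (1 / B.nrm r)) r 0 r) K"
      by (rule B.normalize(3)[OF rH rp KH])
    then show "bergman_inner \<alpha> (lcf (of_real (1 / B.nrm r)) r 0 r) K = 0" using rK rp by simp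
  qed
qed

theorem proposition4p2:
  fixes \<alpha> :: real and w :: complex and \<psi> :: "complex \<Rightarrow> complex"
  assumes "\<alpha> > -1"
    and "w \<in> ball 0 1"
    and "\<psi> holomorphic_on ball 0 1"
    and "bounded_on_bergman \<alpha> (wcomp \<psi> (\<lambda>_. w))"
  shows "(\<forall>\<mu>. \<mu> \<noteq> 0 \<and> (\<forall>z\<in>ball 0 1. bergman_kernel \<alpha> w z = \<mu> * \<psi> z) \<longrightarrow>
            numerical_range \<alpha> (wcomp \<psi> (\<lambda>_. w)) =
              closed_segment 0 (cnj \<mu> * of_real ((bergman_norm \<alpha> \<psi>)\<^sup>2)))
       \<and> (bergman_inner \<alpha> (bergman_kernel \<alpha> w) \<psi> = 0 \<longrightarrow>
            numerical_range \<alpha> (wcomp \<psi> (\<lambda>_. w)) =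
              cball 0 (bergman_norm \<alpha> \<psi> / (2 * (1 - (cmod w)\<^sup>2) powr (\<alpha> / 2 + 1))))
       \<and> ((\<not> (\<exists>\<mu>. \<mu> \<noteq> 0 \<and> (\<forall>z\<in>ball 0 1. bergman_kernel \<alpha> w z = \<mu> * \<psi> z)))
            \<and> bergman_inner \<alpha> (bergman_kernel \<alpha> w) \<psi> \<noteq> 0 \<longrightarrow>
            (\<exists>s. s > cmod (\<psi> w) \<and>
               numerical_range \<alpha> (wcomp \<psi> (\<lambda>_. w)) = {z. cmod z + cmod (z - \<psi> w) \<le> s}))"
proof -
  note a = assms(1) and w = assms(2) and bd = assms(4)
  interpret B: ipspace "bergman \<alpha>" lcf "bergman_inner \<alpha>" by (rule ipspace_bergman[OF a])
  define K where "K = bergman_kernel \<alpha> w"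
  define T where "T = wcomp \<psi> (\<lambda>_. w)"
  define ip where "ip = bergman_inner \<alpha>"
  have KH: "K \<in> bergman \<alpha>" unfolding K_def by (rule kern_in[OF a w])
  have "T (\<lambda>_. 1) \<in> bergman \<alpha>"
    using bd const1_in[OF a] by (simp add: bounded_on_bergman_def T_def)
  moreover have "T (\<lambda>_. 1) = \<psi>" by (simp add: T_def wcomp_def)
  ultimately have pH: "\<psi> \<in> bergman \<alpha>" by simp
  have nrm_eq: "B.nrm f = bergman_norm \<alpha> f" if "f \<in> bergman \<alpha>" for f
    using nrm_bergman[OF a that] .
  have Kn: "B.nrm K = (1 - (cmod w)\<^sup>2) powr (- (\<alpha> / 2 + 1))"
    using kern_norm[OF a w] nrm_eq[OF KH] by (simp add: K_def)
  have x0: "0 < 1 - (cmod w)\<^sup>2" using w by (simp add: abs_square_less_1)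
  have Kpos: "B.nrm K > 0" using Kn x0 by simp
  have repr: "ip f K = f w" if "f \<in> bergman \<alpha>" for f
    unfolding ip_def K_def by (rule reproducing[OF a w that])
  have NR: "numerical_range \<alpha> T = {ip f K * ip \<psi> f | f. f \<in> bergman \<alpha> \<and> B.nrm f = 1}"
  proof -
    have val: "bergman_inner \<alpha> (T f) f = ip f K * ip \<psi> f" if f: "f \<in> bergman \<alpha>" for f
    proof -
      have "T f = lcf (f w) \<psi> 0 \<psi>" by (simp add: T_def wcomp_def fun_eq_iff mult.commute)
      then have "bergman_inner \<alpha> (T f) f = f w * ip \<psi> f"
        using B.ip_lin[OF pH pH f, of "f w" 0] by (simp add: ip_def)
      then show ?thesis using repr[OF f] by simp
    qed
    show ?thesis unfolding numerical_range_def
      using val nrm_eq by (smt (verit, best) Collect_cong)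
  qed
  have KK: "ip K K = of_real ((B.nrm K)\<^sup>2)" unfolding ip_def by (rule B.ip_self[OF KH])
  have KK0: "ip K K \<noteq> 0" using KK Kpos by simp
  define c where "c = ip \<psi> K / ip K K"
  define r where "r = lcf 1 \<psi> (- c) K"
  have rH: "r \<in> bergman \<alpha>" unfolding r_def by (rule B.lc_closed[OF pH KH])
  have rK: "ip r K = 0"
    unfolding r_def ip_def using B.ip_lin[OF pH KH KH, of 1 "- c"] KK0 by (simp add: c_def ip_def)
  have Kr: "ip K r = 0" using B.ip_sym[OF rH KH] rK by (simp add: ip_def)
  have psi_eq: "\<psi> = lcf 1 r c K" by (simp add: r_def fun_eq_iff)
  have pf: "ip \<psi> f = ip r f + c * ip K f" if f: "f \<in> bergman \<alpha>" for f
  proof -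
    have "ip \<psi> f = ip (lcf 1 r c K) f" using psi_eq by simp
    also have "\<dots> = ip r f + c * ip K f" using B.ip_lin[OF rH KH f, of 1 c] by (simp add: ip_def)
    finally show ?thesis .
  qed
  have pK: "ip \<psi> K = c * ip K K" using pf[OF KH] rK by simp
  have npsi: "(B.nrm \<psi>)\<^sup>2 = (B.nrm r)\<^sup>2 + (cmod c)\<^sup>2 * (B.nrm K)\<^sup>2"
  proof -
    have rp: "ip r \<psi> = ip r r"
    proof -
      have "ip r \<psi> = cnj (ip \<psi> r)" using B.ip_sym[OF pH rH] by (simp add: ip_def)
      also have "ip \<psi> r = ip r r + c * ip K r" by (rule pf[OF rH])
      also have "ip r r = of_real ((B.nrm r)\<^sup>2)" unfolding ip_def by (rule B.ip_self[OF rH])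
      finally show ?thesis using Kr \<open>ip r r = _\<close> by simp
    qed
    have Kp: "ip K \<psi> = cnj c * ip K K"
    proof -
      have "ip K \<psi> = cnj (ip \<psi> K)" using B.ip_sym[OF pH KH] by (simp add: ip_def)
      then show ?thesis using pK KK by simp
    qed
    have "of_real ((B.nrm \<psi>)\<^sup>2) = ip \<psi> \<psi>" unfolding ip_def by (rule B.ip_self[OF pH, symmetric])
    also have "\<dots> = ip r r + c * (cnj c * ip K K)" using pf[OF pH] rp Kp by simp
    also have "\<dots> = of_real ((B.nrm r)\<^sup>2 + (cmod c)\<^sup>2 * (B.nrm K)\<^sup>2)"
      unfolding KK using B.ip_self[OF rH] by (simp add: ip_def cmod_sq' algebra_simps)
    finally show ?thesis by (simp only: of_real_eq_iff)
  qed
  obtain q \<gamma> where qH: "q \<in> bergman \<alpha>" and qq: "ip q q = 1" and qK: "ip q K = 0"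
    and pdec: "\<And>f. f \<in> bergman \<alpha> \<Longrightarrow> ip \<psi> f = c * ip K f + \<gamma> * ip q f"
    and ga: "(cmod \<gamma>)\<^sup>2 = (B.nrm r)\<^sup>2"
  proof (cases "B.nrm r > 0")
    case True
    define q where "q = lcf (of_real (1 / B.nrm r)) r 0 r"
    have qH: "q \<in> bergman \<alpha>" unfolding q_def by (rule B.normalize(1)[OF rH True])
    have qq: "ip q q = 1" unfolding q_def ip_def by (rule B.normalize(2)[OF rH True])
    have rf: "ip r f = of_real (B.nrm r) * ip q f" if "f \<in> bergman \<alpha>" for f
      unfolding q_def ip_def by (rule B.normalize(3)[OF rH True that])
    have qK: "ip q K = 0" using rf[OF KH] rK True by simp
    show ?thesis
    proof (rule that[OF qH qq qK])
      show "ip \<psi> f = c * ip K f + of_real (B.nrm r) * ip q f" if "f \<in> bergman \<alpha>" for f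
        using pf[OF that] rf[OF that] by simp
      show "(cmod (complex_of_real (B.nrm r)))\<^sup>2 = (B.nrm r)\<^sup>2" by simp
    qed
  next
    case False
    then have r0: "B.nrm r = 0" using B.nrm_nonneg[OF rH] by simp
    obtain q where qH: "q \<in> bergman \<alpha>" and qq: "ip q q = 1" and qK: "ip q K = 0"
      using orth_unit_exists[OF a KH _ Kpos] kern_0[of \<alpha> w] by (auto simp: K_def ip_def)
    show ?thesis
    proof (rule that[OF qH qq qK])
      show "ip \<psi> f = c * ip K f + 0 * ip q f" if "f \<in> bergman \<alpha>" for f
        using pf[OF that] B.ip_zero_left[OF rH that r0] by (simp add: ip_def)
      show "(cmod (0::complex))\<^sup>2 = (B.nrm r)\<^sup>2" using r0 by simp
    qed
  qed
  have pn: "(B.nrm \<psi>)\<^sup>2 = (cmod c)\<^sup>2 * (B.nrm K)\<^sup>2 + (cmod \<gamma>)\<^sup>2" using npsi ga by simp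
  have ELL: "numerical_range \<alpha> T = {v. cmod v + cmod (v - \<psi> w) \<le> bergman_norm \<alpha> \<psi> * B.nrm K}"
  proof -
    have "{ip f K * ip \<psi> f | f. f \<in> bergman \<alpha> \<and> B.nrm f = 1} =
        {v. cmod v + cmod (v - ip \<psi> K) \<le> B.nrm \<psi> * B.nrm K}"
      unfolding ip_def
      by (rule B.nr_ellipse[OF KH pH Kpos qH qq[unfolded ip_def] qK[unfolded ip_def] pdec[unfolded ip_def] pn])
    then show ?thesis using NR repr[OF pH] nrm_eq[OF pH] by simp
  qed
  show ?thesis
  proof (intro conjI impI allI)
    fix \<mu> assume H: "\<mu> \<noteq> 0 \<and> (\<forall>z\<in>ball 0 1. bergman_kernel \<alpha> w z = \<mu> * \<psi> z)"
    then have m0: "\<mu> \<noteq> 0" and Km: "\<And>z. z \<in> ball 0 1 \<Longrightarrow> K z = \<mu> * \<psi> z" by (auto simp: K_def)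
    have pp: "ip \<psi> \<psi> = of_real ((bergman_norm \<alpha> \<psi>)\<^sup>2)"
      using B.ip_self[OF pH] nrm_eq[OF pH] by (simp add: ip_def)
    have "ip \<psi> K = ip \<psi> (lcf \<mu> \<psi> 0 \<psi>)" unfolding ip_def by (rule inner_cong2) (simp add: Km)
    also have "\<dots> = cnj \<mu> * ip \<psi> \<psi>" using B.ip_lin2[OF pH pH pH, of \<mu> 0] by (simp add: ip_def)
    finally have pw: "\<psi> w = cnj \<mu> * of_real ((bergman_norm \<alpha> \<psi>)\<^sup>2)" using repr[OF pH] pp by simp
    have "ip K K = ip (lcf \<mu> \<psi> 0 \<psi>) (lcf \<mu> \<psi> 0 \<psi>)"
      unfolding ip_def by (subst inner_cong1[where f' = "lcf \<mu> \<psi> 0 \<psi>"], simp add: Km, rule inner_cong2, simp add: Km)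
    also have "\<dots> = \<mu> * ip \<psi> (lcf \<mu> \<psi> 0 \<psi>)"
      using B.ip_lin[OF pH pH B.lc_closed[OF pH pH, of \<mu> 0], of \<mu> 0] by (simp add: ip_def)
    also have "\<dots> = \<mu> * (cnj \<mu> * ip \<psi> \<psi>)" using B.ip_lin2[OF pH pH pH, of \<mu> 0] by (simp add: ip_def)
    finally have "(of_real ((B.nrm K)\<^sup>2) :: complex) = of_real ((cmod \<mu>)\<^sup>2 * (bergman_norm \<alpha> \<psi>)\<^sup>2)"
      using KK pp by (simp add: cmod_sq' mult.assoc)
    then have "(B.nrm K)\<^sup>2 = ((cmod \<mu>) * bergman_norm \<alpha> \<psi>)\<^sup>2" by (simp only: of_real_eq_iff power_mult_distrib)
    then have KN: "B.nrm K = cmod \<mu> * bergman_norm \<alpha> \<psi>"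
      using B.nrm_nonneg[OF KH] nrm_eq[OF pH] B.nrm_nonneg[OF pH] by (simp add: power2_eq_iff_nonneg)
    have "bergman_norm \<alpha> \<psi> * B.nrm K = cmod (cnj \<mu> * of_real ((bergman_norm \<alpha> \<psi>)\<^sup>2))"
      by (simp add: KN norm_mult power2_eq_square)
    then show "numerical_range \<alpha> (wcomp \<psi> (\<lambda>_. w)) = closed_segment 0 (cnj \<mu> * of_real ((bergman_norm \<alpha> \<psi>)\<^sup>2))"
      using ELL segment_char[of "cnj \<mu> * of_real ((bergman_norm \<alpha> \<psi>)\<^sup>2)"] by (simp add: T_def pw)
  next
    assume H: "bergman_inner \<alpha> (bergman_kernel \<alpha> w) \<psi> = 0"
    have "\<psi> w = ip \<psi> K" using repr[OF pH] by simp
    also have "\<dots> = cnj (ip K \<psi>)" using B.ip_sym[OF KH pH] by (simp add: ip_def)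
    also have "ip K \<psi> = 0" using H by (simp add: ip_def K_def)
    finally have pw: "\<psi> w = 0" by simp
    have rad: "bergman_norm \<alpha> \<psi> * B.nrm K / 2 = bergman_norm \<alpha> \<psi> / (2 * (1 - (cmod w)\<^sup>2) powr (\<alpha> / 2 + 1))"
    proof -
      have "(1 - (cmod w)\<^sup>2) powr (- (\<alpha> / 2 + 1)) = 1 / (1 - (cmod w)\<^sup>2) powr (\<alpha> / 2 + 1)"
        by (rule powr_minus_divide)
      moreover have "x * (1 / y) / 2 = x / (2 * y)" for x y :: real by simp
      ultimately show ?thesis by (simp only: Kn)
    qed
    show "numerical_range \<alpha> (wcomp \<psi> (\<lambda>_. w)) = cball 0 (bergman_norm \<alpha> \<psi> / (2 * (1 - (cmod w)\<^sup>2) powr (\<alpha> / 2 + 1)))"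
    proof -
      have E2: "numerical_range \<alpha> (wcomp \<psi> (\<lambda>_. w)) = {v. cmod v + cmod (v - 0) \<le> bergman_norm \<alpha> \<psi> * B.nrm K}"
        using ELL pw by (simp only: T_def)
      have "{v. cmod v + cmod (v - 0) \<le> X} = cball 0 (X / 2)" for X :: real
        by (auto simp: dist_norm)
      then show ?thesis using E2 rad by metis
    qed
  next
    assume H: "(\<not> (\<exists>\<mu>. \<mu> \<noteq> 0 \<and> (\<forall>z\<in>ball 0 1. bergman_kernel \<alpha> w z = \<mu> * \<psi> z))) \<and>
        bergman_inner \<alpha> (bergman_kernel \<alpha> w) \<psi> \<noteq> 0"
    have pw0: "\<psi> w \<noteq> 0"
    proof
      assume "\<psi> w = 0"
      then have "ip \<psi> K = 0" using repr[OF pH] by simp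
      then have "ip K \<psi> = 0" using B.ip_sym[OF pH KH] by (simp add: ip_def)
      then show False using H by (simp add: ip_def K_def)
    qed
    have c0: "c \<noteq> 0" using pw0 repr[OF pH] pK by auto
    have rpos: "B.nrm r > 0"
    proof (rule ccontr)
      assume "\<not> B.nrm r > 0"
      then have "B.nrm r = 0" using B.nrm_nonneg[OF rH] by simp
      then have n0: "bergman_norm \<alpha> r = 0" using nrm_eq[OF rH] by simp
      have "bergman_kernel \<alpha> w z = (1 / c) * \<psi> z" if z: "z \<in> ball 0 1" for z
      proof -
        have "r z = 0" by (rule zero_norm_D[OF a rH n0 z])
        then have "\<psi> z = c * K z" by (simp add: r_def)
        then show ?thesis using c0 by (simp add: K_def)
      qed
      then have "\<exists>\<mu>. \<mu> \<noteq> 0 \<and> (\<forall>z\<in>ball 0 1. bergman_kernel \<alpha> w z = \<mu> * \<psi> z)"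
        using c0 by (intro exI[of _ "1 / c"]) simp
      then show False using H by blast
    qed
    define S where "S = bergman_norm \<alpha> \<psi> * B.nrm K"
    have S0: "S \<ge> 0" using nrm_eq[OF pH] B.nrm_nonneg[OF pH] Kpos by (simp add: S_def)
    have "\<psi> w = c * of_real ((B.nrm K)\<^sup>2)" using repr[OF pH] pK KK by simp
    then have "cmod (\<psi> w) = cmod c * (B.nrm K)\<^sup>2" by (simp add: norm_mult norm_power)
    then have "(cmod (\<psi> w))\<^sup>2 = (cmod c)\<^sup>2 * (B.nrm K)\<^sup>2 * (B.nrm K)\<^sup>2" by (simp add: power_mult_distrib power2_eq_square)
    also have "\<dots> < ((cmod c)\<^sup>2 * (B.nrm K)\<^sup>2 + (cmod \<gamma>)\<^sup>2) * (B.nrm K)\<^sup>2"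
    proof -
      have "(cmod \<gamma>)\<^sup>2 * (B.nrm K)\<^sup>2 > 0" using ga rpos Kpos by simp
      then show ?thesis by (simp add: distrib_right)
    qed
    also have "\<dots> = S\<^sup>2" using pn nrm_eq[OF pH] by (simp add: S_def power_mult_distrib)
    finally have "(cmod (\<psi> w))\<^sup>2 < S\<^sup>2" .
    then have "cmod (\<psi> w) < S" using S0 by (rule power_less_imp_less_base)
    then show "\<exists>s. s > cmod (\<psi> w) \<and> numerical_range \<alpha> (wcomp \<psi> (\<lambda>_. w)) = {z. cmod z + cmod (z - \<psi> w) \<le> s}"
    proof (intro exI conjI)
      show "cmod (\<psi> w) < S" by fact
      show "numerical_range \<alpha> (wcomp \<psi> (\<lambda>_. w)) = {z. cmod z + cmod (z - \<psi> w) \<le> S}"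
        using ELL unfolding S_def T_def .
    qed
  qed
qed

end
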